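(* Let $k>0$ and $p\in[1,\infty]$, and let $X,Y$ be compact, fully supported pmm-spaces. Then $\mathsf{PGW}^k_p(X,Y)=0$ if and only if $X$ and $Y$ are isomorphic.
   Context: A pmm-space is a triple $(X,d_X,\mu_X)$ with $(X,d_X)$ a complete separable metric space and $\mu_X$ a Borel probability measure; compact means $(X,d_X)$ compact; fully supported means $\operatorname{supp}\mu_X=X$. $X$ and $Y$ are isomorphic if there is a measure-preserving isometric bijection $X\to Y$. For a measure $\pi$ on $X\times Y$, $\pi_X,\pi_Y$ are its marginals; for $p<\infty$, $\|d_X-d_Y\|_{L^p(\pi\otimes\pi)}=\left(\iint|d_X(x,x')-d_Y(y,y')|^p\,d\pi(x,y)\,d\pi(x',y')\right)^{1/p}$, and for $p=\infty$ the $\pi\otimes\pi$-essential supremum. For a scalar $\epsilon\ge0$: $\mathsf{PGW}_{\epsilon,p}(X,Y)=\inf\{\|d_X-d_Y\|_{L^p(\pi\otimes\pi)}:\pi$ Borel probability measure on $X\times Y$ with $\pi_X\le(1+\epsilon)\mu_X$ and $\pi_Y\le(1+\epsilon)\mu_Y$ setwise$\}$. The robust partial Gromov–Wasserstein distance is $\mathsf{PGW}^k_p(X,Y)=\inf\{\frac{\epsilon}{1+\epsilon}:\epsilon\ge0,\ \mathsf{PGW}_{\epsilon,p}(X,Y)\le k\epsilon\}$. *)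

theory Defs
  imports "HOL-Probability.Probability"
begin

definition borel_sets_of :: "'a set \<Rightarrow> ('a \<Rightarrow> 'a \<Rightarrow> real) \<Rightarrow> 'a set set" where
  "borel_sets_of X d = sigma_sets X {U. openin (Metric_space.mtopology X d) U}"

definition pmm_space :: "'a set \<Rightarrow> ('a \<Rightarrow> 'a \<Rightarrow> real) \<Rightarrow> 'a measure \<Rightarrow> bool" where
  "pmm_space X d \<mu> \<longleftrightarrow> Metric_space X d \<and> Metric_space.mcomplete X d
     \<and> separable_space (Metric_space.mtopology X d)
     \<and> prob_space \<mu> \<and> space \<mu> = X \<and> sets \<mu> = borel_sets_of X d"

definition pmm_compact :: "'a set \<Rightarrow> ('a \<Rightarrow> 'a \<Rightarrow> real) \<Rightarrow> bool" where
  "pmm_compact X d \<longleftrightarrow> compact_space (Metric_space.mtopology X d)"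

definition mm_support :: "'a set \<Rightarrow> ('a \<Rightarrow> 'a \<Rightarrow> real) \<Rightarrow> 'a measure \<Rightarrow> 'a set" where
  "mm_support X d \<mu> = {x \<in> X. \<forall>U. openin (Metric_space.mtopology X d) U \<and> x \<in> U \<longrightarrow> emeasure \<mu> U > 0}"

definition fully_supported :: "'a set \<Rightarrow> ('a \<Rightarrow> 'a \<Rightarrow> real) \<Rightarrow> 'a measure \<Rightarrow> bool" where
  "fully_supported X d \<mu> \<longleftrightarrow> mm_support X d \<mu> = X"

definition pmm_isomorphic ::
  "'a set \<Rightarrow> ('a \<Rightarrow> 'a \<Rightarrow> real) \<Rightarrow> 'a measure \<Rightarrow> 'b set \<Rightarrow> ('b \<Rightarrow> 'b \<Rightarrow> real) \<Rightarrow> 'b measure \<Rightarrow> bool" where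
  "pmm_isomorphic X dX \<mu>X Y dY \<mu>Y \<longleftrightarrow>
     (\<exists>f. bij_betw f X Y \<and> (\<forall>x\<in>X. \<forall>x'\<in>X. dY (f x) (f x') = dX x x')
          \<and> f \<in> measurable \<mu>X \<mu>Y \<and> distr \<mu>X \<mu>Y f = \<mu>Y)"

definition dist_gap :: "('a \<Rightarrow> 'a \<Rightarrow> real) \<Rightarrow> ('b \<Rightarrow> 'b \<Rightarrow> real) \<Rightarrow> ('a \<times> 'b) \<times> ('a \<times> 'b) \<Rightarrow> real" where
  "dist_gap dX dY z = (case z of ((x, y), (x', y')) \<Rightarrow> \<bar>dX x x' - dY y y'\<bar>)"

text \<open>L^p(pi x pi) norm of d_X - d_Y, for p in [1,infinity] (p = top means p = infinity).\<close>
definition lp_distortion ::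
  "('a \<Rightarrow> 'a \<Rightarrow> real) \<Rightarrow> ('b \<Rightarrow> 'b \<Rightarrow> real) \<Rightarrow> ennreal \<Rightarrow> ('a \<times> 'b) measure \<Rightarrow> ennreal" where
  "lp_distortion dX dY p \<pi> =
     (if p = \<top> then e2ennreal (esssup (\<pi> \<Otimes>\<^sub>M \<pi>) (\<lambda>z. ereal (dist_gap dX dY z)))
      else (let I = (\<integral>\<^sup>+ z. ennreal (dist_gap dX dY z powr enn2real p) \<partial>(\<pi> \<Otimes>\<^sub>M \<pi>))
            in if I = \<top> then \<top> else ennreal (enn2real I powr (1 / enn2real p))))"

definition pgw_admissible ::
  "'a measure \<Rightarrow> 'b measure \<Rightarrow> real \<Rightarrow> ('a \<times> 'b) measure \<Rightarrow> bool" where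
  "pgw_admissible \<mu>X \<mu>Y \<epsilon> \<pi> \<longleftrightarrow>
     prob_space \<pi> \<and> sets \<pi> = sets (\<mu>X \<Otimes>\<^sub>M \<mu>Y)
     \<and> (\<forall>A\<in>sets \<mu>X. emeasure (distr \<pi> \<mu>X fst) A \<le> ennreal (1 + \<epsilon>) * emeasure \<mu>X A)
     \<and> (\<forall>B\<in>sets \<mu>Y. emeasure (distr \<pi> \<mu>Y snd) B \<le> ennreal (1 + \<epsilon>) * emeasure \<mu>Y B)"

definition PGW_eps ::
  "('a \<Rightarrow> 'a \<Rightarrow> real) \<Rightarrow> 'a measure \<Rightarrow> ('b \<Rightarrow> 'b \<Rightarrow> real) \<Rightarrow> 'b measure \<Rightarrow> real \<Rightarrow> ennreal \<Rightarrow> ennreal" where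
  "PGW_eps dX \<mu>X dY \<mu>Y \<epsilon> p =
     Inf {lp_distortion dX dY p \<pi> | \<pi>. pgw_admissible \<mu>X \<mu>Y \<epsilon> \<pi>}"

definition PGW_robust ::
  "('a \<Rightarrow> 'a \<Rightarrow> real) \<Rightarrow> 'a measure \<Rightarrow> ('b \<Rightarrow> 'b \<Rightarrow> real) \<Rightarrow> 'b measure \<Rightarrow> real \<Rightarrow> ennreal \<Rightarrow> real" where
  "PGW_robust dX \<mu>X dY \<mu>Y k p =
     Inf {\<epsilon> / (1 + \<epsilon>) | \<epsilon>. \<epsilon> \<ge> 0 \<and> PGW_eps dX \<mu>X dY \<mu>Y \<epsilon> p \<le> ennreal (k * \<epsilon>)}"

end

theory Submission
  imports Defs
begin

lemma lp_lower:
  fixes \<pi> :: "('a \<times> 'b) measure"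
  assumes P: "prob_space \<pi>" and E1: "E1 \<in> sets \<pi>" and E2: "E2 \<in> sets \<pi>"
    and a: "0 \<le> a" and m1: "0 \<le> m1" "m1 \<le> measure \<pi> E1" and m2: "0 \<le> m2" "m2 \<le> measure \<pi> E2"
    and gap: "\<And>z1 z2. z1 \<in> E1 \<Longrightarrow> z2 \<in> E2 \<Longrightarrow> a \<le> dist_gap dX dY (z1, z2)"
    and p: "1 \<le> p"
  shows "ennreal (a * m1 * m2) \<le> lp_distortion dX dY p \<pi>"
proof -
  interpret prob_space \<pi> by fact
  have PP: "prob_space (\<pi> \<Otimes>\<^sub>M \<pi>)" by (rule prob_space_pair[OF P P])
  interpret PP: prob_space "\<pi> \<Otimes>\<^sub>M \<pi>" by fact
  define E where "E = E1 \<times> E2"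
  have Es: "E \<in> sets (\<pi> \<Otimes>\<^sub>M \<pi>)" using E1 E2 by (simp add: E_def)
  have "emeasure (\<pi> \<Otimes>\<^sub>M \<pi>) E = emeasure \<pi> E1 * emeasure \<pi> E2"
    unfolding E_def by (rule emeasure_pair_measure_Times[OF E1 E2])
  then have mE: "measure (\<pi> \<Otimes>\<^sub>M \<pi>) E = measure \<pi> E1 * measure \<pi> E2"
    by (simp add: measure_def enn2real_mult)
  have m1le: "m1 \<le> 1" using m1 prob_le_1[of E1] by linarith
  have m2le: "m2 \<le> 1" using m2 prob_le_1[of E2] by linarith
  have mEge: "m1 * m2 \<le> measure (\<pi> \<Otimes>\<^sub>M \<pi>) E"
    unfolding mE by (rule mult_mono) (use m1 m2 in auto)
  have amm: "a * m1 * m2 \<le> a"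
  proof -
    have "m1 * m2 \<le> 1" using m1 m2 m1le m2le by (simp add: mult_le_one)
    then show ?thesis using a by (simp add: mult.assoc mult_left_le)
  qed
  define f where "f = dist_gap dX dY"
  have fE: "\<And>z. z \<in> E \<Longrightarrow> a \<le> f z" using gap by (auto simp: E_def f_def)
  show ?thesis
  proof (cases "p = \<top>")
    case True
    have "ennreal (a * m1 * m2) \<le> e2ennreal (esssup (\<pi> \<Otimes>\<^sub>M \<pi>) (\<lambda>z. ereal (f z)))"
    proof (cases "(\<lambda>z. ereal (f z)) \<in> borel_measurable (\<pi> \<Otimes>\<^sub>M \<pi>)")
      case False
      then show ?thesis by (simp add: esssup_non_measurable top_ereal_def)
    next
      case meas: True
      show ?thesis
      proof (cases "a * m1 * m2 = 0")
        case True then show ?thesis by (simp only: ennreal_0 zero_le)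
      next
        case False
        then have "0 < m1 * m2" using a m1 m2 by (metis mult.assoc mult_eq_0_iff order_le_less zero_less_mult_iff)
        then have posE: "0 < measure (\<pi> \<Otimes>\<^sub>M \<pi>) E" using mEge by linarith
        have "ereal a \<le> esssup (\<pi> \<Otimes>\<^sub>M \<pi>) (\<lambda>z. ereal (f z))"
        proof (rule ccontr)
          assume "\<not> ?thesis"
          then have lt: "esssup (\<pi> \<Otimes>\<^sub>M \<pi>) (\<lambda>z. ereal (f z)) < ereal a" by simp
          have "AE z in \<pi> \<Otimes>\<^sub>M \<pi>. ereal (f z) \<le> esssup (\<pi> \<Otimes>\<^sub>M \<pi>) (\<lambda>z. ereal (f z))"
            by (rule esssup_AE)
          then have "AE z in \<pi> \<Otimes>\<^sub>M \<pi>. z \<notin> E"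
          proof (rule eventually_mono)
            fix z assume "ereal (f z) \<le> esssup (\<pi> \<Otimes>\<^sub>M \<pi>) (\<lambda>z. ereal (f z))"
            then have "ereal (f z) < ereal a" using lt by (rule le_less_trans)
            then show "z \<notin> E" using fE[of z] by auto
          qed
          moreover have "{z \<in> space (\<pi> \<Otimes>\<^sub>M \<pi>). \<not> z \<notin> E} = E"
            using sets.sets_into_space[OF Es] by auto
          ultimately have "emeasure (\<pi> \<Otimes>\<^sub>M \<pi>) E = 0"
            using AE_iff_measurable[of "E" "\<pi> \<Otimes>\<^sub>M \<pi>" "\<lambda>z. z \<notin> E"] Es by simp
          then show False using posE by (simp add: measure_def)
        qed
        then have "e2ennreal (ereal a) \<le> e2ennreal (esssup (\<pi> \<Otimes>\<^sub>M \<pi>) (\<lambda>z. ereal (f z)))"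
          by (rule e2ennreal_mono)
        then show ?thesis using amm by (simp add: order_trans[OF ennreal_leI[OF amm]])
      qed
    qed
    then show ?thesis using True by (simp add: lp_distortion_def f_def)
  next
    case False
    define q where "q = enn2real p"
    have q1: "1 \<le> q" using p False unfolding q_def
      by (metis enn2real_1 enn2real_mono top.not_eq_extremum)
    define I where "I = (\<integral>\<^sup>+ z. ennreal (f z powr q) \<partial>(\<pi> \<Otimes>\<^sub>M \<pi>))"
    have "(\<integral>\<^sup>+ z. ennreal (a powr q) * indicator E z \<partial>(\<pi> \<Otimes>\<^sub>M \<pi>)) \<le> I"
      unfolding I_def
    proof (rule nn_integral_mono)
      fix z assume "z \<in> space (\<pi> \<Otimes>\<^sub>M \<pi>)"
      show "ennreal (a powr q) * indicator E z \<le> ennreal (f z powr q)"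
      proof (cases "z \<in> E")
        case True
        then have "a powr q \<le> f z powr q" using fE[OF True] a q1 by (intro powr_mono2) auto
        then show ?thesis using True by (simp add: ennreal_leI)
      qed simp
    qed
    then have Ige: "ennreal (a powr q) * emeasure (\<pi> \<Otimes>\<^sub>M \<pi>) E \<le> I"
      using nn_integral_cmult_indicator[OF Es] by simp
    show ?thesis
    proof (cases "I = \<top>")
      case True
      then show ?thesis using False by (simp add: lp_distortion_def f_def I_def q_def Let_def)
    next
      case Ifin: False
      have "ennreal (a powr q * measure (\<pi> \<Otimes>\<^sub>M \<pi>) E) \<le> I"
        using Ige by (simp add: PP.emeasure_eq_measure ennreal_mult)
      then have "enn2real (ennreal (a powr q * measure (\<pi> \<Otimes>\<^sub>M \<pi>) E)) \<le> enn2real I"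
        using Ifin by (intro enn2real_mono) (auto simp: top.not_eq_extremum)
      then have "a powr q * measure (\<pi> \<Otimes>\<^sub>M \<pi>) E \<le> enn2real I" by simp
      moreover have "a powr q * (m1 * m2) \<le> a powr q * measure (\<pi> \<Otimes>\<^sub>M \<pi>) E"
        using mEge by (intro mult_left_mono) auto
      ultimately have I1: "a powr q * (m1 * m2) \<le> enn2real I" by linarith
      have mm0: "0 \<le> m1 * m2" using m1 m2 by simp
      have "a * (m1 * m2) \<le> a * (m1 * m2) powr (1 / q)"
      proof (rule mult_left_mono[OF _ a])
        show "m1 * m2 \<le> (m1 * m2) powr (1 / q)"
        proof (cases "m1 * m2 = 0")
          case True then show ?thesis unfolding True by simp
        next
          case False
          have "(m1 * m2) powr 1 \<le> (m1 * m2) powr (1 / q)"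
            using q1 mm0 m1le m2le m1 m2 by (intro powr_mono') (auto simp: mult_le_one)
          then show ?thesis using False mm0 by simp
        qed
      qed
      also have "\<dots> = (a powr q * (m1 * m2)) powr (1 / q)"
        using a mm0 q1 by (simp add: powr_mult powr_powr)
      also have "\<dots> \<le> (enn2real I) powr (1 / q)"
        using I1 q1 a mm0 by (intro powr_mono2) auto
      finally have "a * m1 * m2 \<le> (enn2real I) powr (1 / q)" by (simp add: mult.assoc)
      then show ?thesis using False Ifin
        by (simp add: lp_distortion_def f_def I_def q_def Let_def ennreal_leI)
    qed
  qed
qed

lemma dist_gap_simp [simp]: "dist_gap dX dY ((x, y), (x', y')) = \<bar>dX x x' - dY y y'\<bar>"
  by (simp add: dist_gap_def)

lemma dist_gap_nonneg: "0 \<le> dist_gap dX dY z"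
proof -
  obtain x y x' y' where "z = ((x, y), (x', y'))" by (cases z) auto
  then show ?thesis by simp
qed

lemma lp_upper:
  fixes \<pi> :: "('a \<times> 'b) measure"
  assumes P: "prob_space \<pi>" and D: "0 \<le> D"
    and meas: "dist_gap dX dY \<in> borel_measurable (\<pi> \<Otimes>\<^sub>M \<pi>)"
    and AE: "AE z in \<pi> \<Otimes>\<^sub>M \<pi>. dist_gap dX dY z \<le> D" and p: "1 \<le> p"
  shows "lp_distortion dX dY p \<pi> \<le> ennreal D"
proof -
  interpret prob_space \<pi> by fact
  have PP: "prob_space (\<pi> \<Otimes>\<^sub>M \<pi>)" by (rule prob_space_pair[OF P P])
  interpret PP: prob_space "\<pi> \<Otimes>\<^sub>M \<pi>" by fact
  define f where "f = dist_gap dX dY"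
  show ?thesis
  proof (cases "p = \<top>")
    case True
    have m: "(\<lambda>z. ereal (f z)) \<in> borel_measurable (\<pi> \<Otimes>\<^sub>M \<pi>)"
      unfolding f_def by (rule borel_measurable_ereal[OF meas])
    have "esssup (\<pi> \<Otimes>\<^sub>M \<pi>) (\<lambda>z. ereal (f z)) \<le> ereal D"
      by (rule esssup_I[OF m]) (use AE in \<open>auto simp: f_def\<close>)
    then have "e2ennreal (esssup (\<pi> \<Otimes>\<^sub>M \<pi>) (\<lambda>z. ereal (f z))) \<le> e2ennreal (ereal D)"
      by (rule e2ennreal_mono)
    then show ?thesis using True by (simp add: lp_distortion_def f_def)
  next
    case False
    define q where "q = enn2real p"
    have q1: "1 \<le> q" using p False unfolding q_def
      by (metis enn2real_1 enn2real_mono top.not_eq_extremum)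
    define I where "I = (\<integral>\<^sup>+ z. ennreal (f z powr q) \<partial>(\<pi> \<Otimes>\<^sub>M \<pi>))"
    have "I \<le> (\<integral>\<^sup>+ z. ennreal (D powr q) \<partial>(\<pi> \<Otimes>\<^sub>M \<pi>))"
      unfolding I_def
    proof (rule nn_integral_mono_AE)
      show "AE z in \<pi> \<Otimes>\<^sub>M \<pi>. ennreal (f z powr q) \<le> ennreal (D powr q)"
        using AE
      proof (rule eventually_mono)
        fix z assume "dist_gap dX dY z \<le> D"
        then show "ennreal (f z powr q) \<le> ennreal (D powr q)"
          using q1 dist_gap_nonneg[of dX dY z] by (intro ennreal_leI powr_mono2) (auto simp: f_def)
      qed
    qed
    also have "\<dots> = ennreal (D powr q)" by (simp add: PP.emeasure_space_1)
    finally have Ile: "I \<le> ennreal (D powr q)" .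
    have "I < \<top>" using Ile ennreal_less_top by (rule le_less_trans)
    then have Ifin: "I \<noteq> \<top>" by simp
    have "enn2real I \<le> D powr q"
      using enn2real_mono[OF Ile ennreal_less_top] by simp
    then have "(enn2real I) powr (1 / q) \<le> (D powr q) powr (1 / q)"
      using q1 by (intro powr_mono2) auto
    also have "\<dots> = D" using q1 D by (simp add: powr_powr)
    finally show ?thesis using False Ifin
      by (simp add: lp_distortion_def f_def I_def q_def Let_def ennreal_leI)
  qed
qed

lemma ex_inv_Suc_less: "0 < (x::real) \<Longrightarrow> \<exists>n. inverse (real (Suc n)) < x"
proof -
  assume "0 < x"
  then obtain n where "n > 0" "inverse (real n) < x" using ex_inverse_of_nat_less by blast
  then show ?thesis by (intro exI[of _ "n - 1"]) auto
qed

locale cpmm = Metric_space M d for M :: "'a set" and d +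
  fixes \<mu> :: "'a measure"
  assumes pmm: "pmm_space M d \<mu>" and cpt: "pmm_compact M d" and fsupp: "fully_supported M d \<mu>"
begin

lemma prob: "prob_space \<mu>" and space_eq: "space \<mu> = M" and sets_eq: "sets \<mu> = borel_sets_of M d"
  using pmm by (auto simp: pmm_space_def)

sublocale P: prob_space \<mu> by (rule prob)

lemma M_ne: "M \<noteq> {}"
  using P.not_empty space_eq by simp

lemma open_sets: "openin mtopology U \<Longrightarrow> U \<in> sets \<mu>"
  unfolding sets_eq borel_sets_of_def by (rule sigma_sets.Basic) simp

lemma closed_sets: "closedin mtopology F \<Longrightarrow> F \<in> sets \<mu>"
proof -
  assume F: "closedin mtopology F"
  then have O: "openin mtopology (M - F)" and FM: "F \<subseteq> M" by (auto simp: closedin_def)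
  from O have "M - F \<in> sets \<mu>" by (rule open_sets)
  then have "space \<mu> - (M - F) \<in> sets \<mu>" by blast
  moreover have "space \<mu> - (M - F) = F" using FM space_eq by auto
  ultimately show ?thesis by simp
qed

lemma mball_sets [simp]: "mball x r \<in> sets \<mu>"
  by (rule open_sets) simp

lemma ball_pos: "x \<in> M \<Longrightarrow> 0 < r \<Longrightarrow> 0 < measure \<mu> (mball x r)"
proof -
  assume x: "x \<in> M" and r: "0 < r"
  have "x \<in> mm_support M d \<mu>" using fsupp x by (simp add: fully_supported_def)
  moreover have "x \<in> mball x r" using x r by simp
  ultimately have "0 < emeasure \<mu> (mball x r)" unfolding mm_support_def by simp
  then show ?thesis by (simp add: P.emeasure_eq_measure)
qed

lemma nets: "0 < r \<Longrightarrow> \<exists>N. finite N \<and> N \<subseteq> M \<and> M \<subseteq> (\<Union>s\<in>N. mball s r)"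
  using cpt unfolding pmm_compact_def compact_space_eq_mcomplete_mtotally_bounded mtotally_bounded_def
  by blast

lemma nets_ne: "0 < r \<Longrightarrow> \<exists>N. finite N \<and> N \<noteq> {} \<and> N \<subseteq> M \<and> M \<subseteq> (\<Union>s\<in>N. mball s r)"
proof -
  assume r: "0 < r"
  obtain N where N: "finite N" "N \<subseteq> M" "M \<subseteq> (\<Union>s\<in>N. mball s r)" using nets[OF r] by blast
  have "N \<noteq> {}" using N(3) M_ne by auto
  with N show ?thesis by blast
qed

lemma ball_lower: "0 < r \<Longrightarrow> \<exists>\<rho>>0. \<forall>x\<in>M. \<rho> \<le> measure \<mu> (mball x r)"
proof -
  assume r: "0 < r"
  then obtain N where N: "finite N" "N \<noteq> {}" "N \<subseteq> M" "M \<subseteq> (\<Union>s\<in>N. mball s (r/2))"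
    using nets_ne[of "r/2"] by auto
  define \<rho> where "\<rho> = Min ((\<lambda>s. measure \<mu> (mball s (r/2))) ` N)"
  have "\<rho> \<in> (\<lambda>s. measure \<mu> (mball s (r/2))) ` N" unfolding \<rho>_def using N by (intro Min_in) auto
  then have "\<rho> > 0" using N r ball_pos by auto
  moreover have "\<rho> \<le> measure \<mu> (mball x r)" if x: "x \<in> M" for x
  proof -
    have "x \<in> (\<Union>s\<in>N. mball s (r/2))" using N(4) x by blast
    then obtain s where s: "s \<in> N" "x \<in> mball s (r/2)" by blast
    have "mball s (r/2) \<subseteq> mball x r" using s by (intro mball_subset) (auto simp: commute)
    then have "measure \<mu> (mball s (r/2)) \<le> measure \<mu> (mball x r)"
      by (intro P.finite_measure_mono) auto
    moreover have "\<rho> \<le> measure \<mu> (mball s (r/2))" unfolding \<rho>_def using N s by (intro Min_le) auto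
    ultimately show ?thesis by linarith
  qed
  ultimately show ?thesis by blast
qed

lemma bounded: "\<exists>D\<ge>0. \<forall>x\<in>M. \<forall>y\<in>M. d x y \<le> D"
proof -
  have "compactin mtopology M" using cpt by (simp add: pmm_compact_def compact_space_def)
  then have "mbounded M" by (rule compactin_imp_mbounded)
  then obtain c B where cB: "M \<subseteq> mcball c B" by (auto simp: mbounded_def)
  have "d x y \<le> 2 * B" if "x \<in> M" "y \<in> M" for x y
  proof -
    have "d c x \<le> B" "d c y \<le> B" "c \<in> M" using cB that by auto
    moreover have "d x y \<le> d x c + d c y" using that \<open>c \<in> M\<close> triangle[of x c y] by simp
    ultimately show ?thesis using commute[of x c] by linarith
  qed
  moreover have "0 \<le> 2 * B"
  proof -
    obtain x where "x \<in> M" using M_ne by auto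
    then have "x \<in> mcball c B" using cB by blast
    then have "d c x \<le> B" by simp
    then show ?thesis using nonneg[of c x] by linarith
  qed
  ultimately show ?thesis by blast
qed

lemma dist_meas_left: "s \<in> M \<Longrightarrow> (\<lambda>x. d x s) \<in> borel_measurable \<mu>"
proof -
  assume s: "s \<in> M"
  have "{w \<in> space \<mu>. d w s < a} = mball s a" for a
    using s by (auto simp: space_eq commute)
  then show ?thesis unfolding borel_measurable_iff_less by simp
qed

lemma dist_meas_prod: "(\<lambda>z. d (fst z) (snd z)) \<in> borel_measurable (\<mu> \<Otimes>\<^sub>M \<mu>)"
proof -
  have "\<forall>n. \<exists>N. finite N \<and> N \<noteq> {} \<and> N \<subseteq> M \<and> M \<subseteq> (\<Union>s\<in>N. mball s (inverse (real (Suc n))))"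
    using nets_ne by simp
  then obtain N where N: "\<And>n. finite (N n)" "\<And>n. N n \<noteq> {}" "\<And>n. N n \<subseteq> M"
      "\<And>n. M \<subseteq> (\<Union>s\<in>N n. mball s (inverse (real (Suc n))))"
    by metis
  define h where "h n z = Min ((\<lambda>s. d (fst z) s + d s (snd z)) ` N n)" for n z
  show ?thesis
  proof (rule borel_measurable_LIMSEQ_real[where u=h])
    fix n
    show "h n \<in> borel_measurable (\<mu> \<Otimes>\<^sub>M \<mu>)"
      unfolding h_def
    proof (rule borel_measurable_Min[OF N(1)])
      fix s assume s: "s \<in> N n"
      then have sM: "s \<in> M" using N(3) by auto
      have 1: "(\<lambda>z. d (fst z) s) \<in> borel_measurable (\<mu> \<Otimes>\<^sub>M \<mu>)"
        using measurable_compose[OF measurable_fst[of \<mu> \<mu>] dist_meas_left[OF sM]] by (simp add: o_def)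
      have m2: "(\<lambda>z. d (snd z) s) \<in> borel_measurable (\<mu> \<Otimes>\<^sub>M \<mu>)"
        using measurable_compose[OF measurable_snd[of \<mu> \<mu>] dist_meas_left[OF sM]] by (simp add: o_def)
      have eq: "(\<lambda>z. d s (snd z)) = (\<lambda>z. d (snd z) s)"
        by (rule ext) (rule commute)
      have 2: "(\<lambda>z. d s (snd z)) \<in> borel_measurable (\<mu> \<Otimes>\<^sub>M \<mu>)" 
        using m2 by (simp only: eq)
      show "(\<lambda>z. d (fst z) s + d s (snd z)) \<in> borel_measurable (\<mu> \<Otimes>\<^sub>M \<mu>)"
        using 1 2 by (rule borel_measurable_add)
    qed
  next
    fix z assume z: "z \<in> space (\<mu> \<Otimes>\<^sub>M \<mu>)"
    then have zM: "fst z \<in> M" "snd z \<in> M" by (auto simp: space_pair_measure space_eq)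
    have lo: "d (fst z) (snd z) \<le> h n z" for n
      unfolding h_def using N(1,2,3) zM
      by (subst Min_ge_iff) (auto intro!: triangle)
    have hi: "h n z \<le> d (fst z) (snd z) + 2 * inverse (real (Suc n))" for n
    proof -
      obtain s where s: "s \<in> N n" "fst z \<in> mball s (inverse (real (Suc n)))"
        using N(4)[of n] zM by auto
      then have sM: "s \<in> M" and ds: "d s (fst z) < inverse (real (Suc n))" by auto
      have "h n z \<le> d (fst z) s + d s (snd z)"
        unfolding h_def using N(1) s by (intro Min_le) auto
      also have "d s (snd z) \<le> d s (fst z) + d (fst z) (snd z)"
        using sM zM by (intro triangle) auto
      finally show ?thesis using ds commute[of s "fst z"] by linarith
    qed
    have "(\<lambda>n. d (fst z) (snd z) + 2 * inverse (real (Suc n))) \<longlonglongrightarrow> d (fst z) (snd z) + 2 * 0"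
      by (intro tendsto_intros LIMSEQ_inverse_real_of_nat)
    then have L: "(\<lambda>n. d (fst z) (snd z) + 2 * inverse (real (Suc n))) \<longlonglongrightarrow> d (fst z) (snd z)"
      by simp
    have e1: "eventually (\<lambda>n. d (fst z) (snd z) \<le> h n z) sequentially" using lo by simp
    have e2: "eventually (\<lambda>n. h n z \<le> d (fst z) (snd z) + 2 * inverse (real (Suc n))) sequentially"
      using hi by simp
    show "(\<lambda>n. h n z) \<longlonglongrightarrow> d (fst z) (snd z)"
      by (rule tendsto_sandwich[OF e1 e2 tendsto_const L])
  qed
qed

lemma ultra_lim:
  assumes U: "U \<noteq> bot" "\<forall>P. eventually P U \<or> eventually (\<lambda>x. \<not> P x) U"
    and y: "\<And>n. y n \<in> M"
  shows "\<exists>l\<in>M. \<forall>\<delta>>0. eventually (\<lambda>n. d (y n) l < \<delta>) U"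
proof (rule ccontr)
  assume "\<not> ?thesis"
  then have "\<forall>l\<in>M. \<exists>\<delta>>0. eventually (\<lambda>n. \<not> d (y n) l < \<delta>) U"
    using U(2) by blast
  then obtain \<delta> where \<delta>: "\<And>l. l \<in> M \<Longrightarrow> \<delta> l > 0"
    "\<And>l. l \<in> M \<Longrightarrow> eventually (\<lambda>n. \<not> d (y n) l < \<delta> l) U"
    by metis
  have "compactin mtopology M" using cpt by (simp add: pmm_compact_def compact_space_def)
  moreover have "M \<subseteq> \<Union>((\<lambda>l. mball l (\<delta> l)) ` M)"
    using \<delta>(1) by force
  moreover have "\<forall>U\<in>(\<lambda>l. mball l (\<delta> l)) ` M. openin mtopology U" by auto
  ultimately obtain F where F: "finite F" "F \<subseteq> (\<lambda>l. mball l (\<delta> l)) ` M" "M \<subseteq> \<Union>F"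
    unfolding compactin_def by blast
  have "\<exists>L\<subseteq>M. finite L \<and> F = (\<lambda>l. mball l (\<delta> l)) ` L"
    by (rule finite_subset_image[OF F(1) F(2)])
  then obtain L where L: "L \<subseteq> M" "finite L" "F = (\<lambda>l. mball l (\<delta> l)) ` L"
    by (elim exE conjE) (rule that)
  have "eventually (\<lambda>n. \<forall>l\<in>L. \<not> d (y n) l < \<delta> l) U"
    using L(1,2) \<delta>(2) by (intro eventually_ball_finite) auto
  then obtain n where n: "\<forall>l\<in>L. \<not> d (y n) l < \<delta> l"
    using U(1) eventually_happens by blast
  obtain l where l: "l \<in> L" "y n \<in> mball l (\<delta> l)" using F(3) L(3) y[of n] by auto
  then have "d l (y n) < \<delta> l" by simp
  then have "d (y n) l < \<delta> l" using commute[of l "y n"] by simp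
  with n l(1) show False by blast
qed

lemma nbhd_lim:
  assumes F: "closedin mtopology F" and e: "0 < e"
  shows "\<exists>\<delta>>0. measure \<mu> {x\<in>M. \<exists>z\<in>F. d x z < \<delta>} \<le> measure \<mu> F + e"
proof -
  have FM: "F \<subseteq> M" using closedin_subset[OF F] by simp
  define A where "A n = {x\<in>M. \<exists>z\<in>F. d x z < inverse (real (Suc n))}" for n
  have Aopen: "A n = (\<Union>z\<in>F. mball z (inverse (real (Suc n))))" for n
  proof (rule set_eqI)
    fix x
    show "x \<in> A n \<longleftrightarrow> x \<in> (\<Union>z\<in>F. mball z (inverse (real (Suc n))))"
    proof
      assume "x \<in> A n"
      then obtain z where "x \<in> M" "z \<in> F" "d x z < inverse (real (Suc n))" by (auto simp: A_def)
      then show "x \<in> (\<Union>z\<in>F. mball z (inverse (real (Suc n))))"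
        using FM commute[of x z] by auto
    next
      assume "x \<in> (\<Union>z\<in>F. mball z (inverse (real (Suc n))))"
      then obtain z where "x \<in> M" "z \<in> F" "d z x < inverse (real (Suc n))" by auto
      then show "x \<in> A n" using commute[of x z] unfolding A_def by (intro CollectI conjI bexI[of _ z]) auto
    qed
  qed
  have As: "range A \<subseteq> sets \<mu>"
    unfolding Aopen by (auto intro!: open_sets)
  have dec: "decseq A"
  proof (rule decseq_SucI)
    fix n
    have "inverse (real (Suc (Suc n))) \<le> inverse (real (Suc n))"
      by (simp add: field_simps)
    then show "A (Suc n) \<subseteq> A n" unfolding A_def
      by (smt (verit, best) Collect_mono_iff)
  qed
  have int: "(\<Inter>n. A n) = F"
  proof
    show "F \<subseteq> (\<Inter>n. A n)" using FM by (force simp: A_def)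
  next
    show "(\<Inter>n. A n) \<subseteq> F"
    proof
      fix x assume x: "x \<in> (\<Inter>n. A n)"
      then have xM: "x \<in> M" by (auto simp: A_def)
      show "x \<in> F"
      proof (rule ccontr)
        assume "x \<notin> F"
        moreover have "openin mtopology (M - F)" using F by (simp add: closedin_def)
        ultimately obtain r where r: "r > 0" "mball x r \<subseteq> M - F"
          using xM by (auto simp: openin_mtopology)
        obtain n where n: "inverse (real (Suc n)) < r" using ex_inv_Suc_less r(1) by blast
        obtain z where z: "z \<in> F" "d x z < inverse (real (Suc n))" using x by (auto simp: A_def)
        then have "z \<in> mball x r" using n xM FM by auto
        then show False using r z by auto
      qed
    qed
  qed
  have "(\<lambda>n. measure \<mu> (A n)) \<longlonglongrightarrow> measure \<mu> F"
    using P.finite_Lim_measure_decseq[OF As dec] int by simp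
  then have "eventually (\<lambda>n. measure \<mu> (A n) < measure \<mu> F + e) sequentially"
    using e by (intro order_tendstoD(2)) auto
  then obtain n where "measure \<mu> (A n) < measure \<mu> F + e" by (auto simp: eventually_sequentially)
  then show ?thesis by (intro exI[of _ "inverse (real (Suc n))"]) (auto simp: A_def)
qed

end

locale pmm2 = MX: cpmm X dX \<mu>X + MY: cpmm Y dY \<mu>Y
  for X :: "'a set" and dX and \<mu>X and Y :: "'b set" and dY and \<mu>Y
begin

lemma space_prod: "space (\<mu>X \<Otimes>\<^sub>M \<mu>Y) = X \<times> Y"
  unfolding space_pair_measure MX.space_eq MY.space_eq ..

lemma fst_meas: assumes "sets \<pi> = sets (\<mu>X \<Otimes>\<^sub>M \<mu>Y)" shows "fst \<in> measurable \<pi> \<mu>X"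
  using measurable_fst[of \<mu>X \<mu>Y] unfolding measurable_cong_sets[OF assms refl] .

lemma snd_meas: assumes "sets \<pi> = sets (\<mu>X \<Otimes>\<^sub>M \<mu>Y)" shows "snd \<in> measurable \<pi> \<mu>Y"
  using measurable_snd[of \<mu>X \<mu>Y] unfolding measurable_cong_sets[OF assms refl] .

lemma space_plan: "sets \<pi> = sets (\<mu>X \<Otimes>\<^sub>M \<mu>Y) \<Longrightarrow> space \<pi> = X \<times> Y"
  using sets_eq_imp_space_eq space_prod by metis

lemma distr_fst_eq:
  assumes S: "sets \<pi> = sets (\<mu>X \<Otimes>\<^sub>M \<mu>Y)" and A: "A \<in> sets \<mu>X"
  shows "emeasure (distr \<pi> \<mu>X fst) A = emeasure \<pi> (A \<times> Y)"
proof -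
  have "emeasure (distr \<pi> \<mu>X fst) A = emeasure \<pi> (fst -` A \<inter> space \<pi>)"
    by (rule emeasure_distr[OF fst_meas[OF S] A])
  moreover have "fst -` A \<inter> space \<pi> = A \<times> Y"
    using sets.sets_into_space[OF A] space_plan[OF S] MX.space_eq by auto
  ultimately show ?thesis by simp
qed

lemma distr_snd_eq:
  assumes S: "sets \<pi> = sets (\<mu>X \<Otimes>\<^sub>M \<mu>Y)" and B: "B \<in> sets \<mu>Y"
  shows "emeasure (distr \<pi> \<mu>Y snd) B = emeasure \<pi> (X \<times> B)"
proof -
  have "emeasure (distr \<pi> \<mu>Y snd) B = emeasure \<pi> (snd -` B \<inter> space \<pi>)"
    by (rule emeasure_distr[OF snd_meas[OF S] B])
  moreover have "snd -` B \<inter> space \<pi> = X \<times> B"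
    using sets.sets_into_space[OF B] space_plan[OF S] MY.space_eq by auto
  ultimately show ?thesis by simp
qed

lemma rect_sets:
  "sets \<pi> = sets (\<mu>X \<Otimes>\<^sub>M \<mu>Y) \<Longrightarrow> A \<in> sets \<mu>X \<Longrightarrow> B \<in> sets \<mu>Y \<Longrightarrow> A \<times> B \<in> sets \<pi>"
  by simp

lemma X_sets: "X \<in> sets \<mu>X" using sets.top[of \<mu>X] MX.space_eq by simp
lemma Y_sets: "Y \<in> sets \<mu>Y" using sets.top[of \<mu>Y] MY.space_eq by simp

context
  fixes \<pi> \<epsilon>
  assumes adm: "pgw_admissible \<mu>X \<mu>Y \<epsilon> \<pi>" and eps: "0 \<le> \<epsilon>"
begin

lemma plan_prob: "prob_space \<pi>" and plan_sets: "sets \<pi> = sets (\<mu>X \<Otimes>\<^sub>M \<mu>Y)"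
  using adm by (auto simp: pgw_admissible_def)

interpretation PI: prob_space \<pi> by (rule plan_prob)

lemma margX: "A \<in> sets \<mu>X \<Longrightarrow> measure \<pi> (A \<times> Y) \<le> (1 + \<epsilon>) * measure \<mu>X A"
proof -
  assume A: "A \<in> sets \<mu>X"
  have "emeasure \<pi> (A \<times> Y) \<le> ennreal (1 + \<epsilon>) * emeasure \<mu>X A"
    using adm A distr_fst_eq[OF plan_sets A] by (auto simp: pgw_admissible_def)
  also have "\<dots> = ennreal ((1 + \<epsilon>) * measure \<mu>X A)"
    using eps by (simp add: MX.P.emeasure_eq_measure ennreal_mult)
  finally show ?thesis
    using eps by (simp add: PI.emeasure_eq_measure)
qed

lemma margY: "B \<in> sets \<mu>Y \<Longrightarrow> measure \<pi> (X \<times> B) \<le> (1 + \<epsilon>) * measure \<mu>Y B"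
proof -
  assume B: "B \<in> sets \<mu>Y"
  have "emeasure \<pi> (X \<times> B) \<le> ennreal (1 + \<epsilon>) * emeasure \<mu>Y B"
    using adm B distr_snd_eq[OF plan_sets B] by (auto simp: pgw_admissible_def)
  also have "\<dots> = ennreal ((1 + \<epsilon>) * measure \<mu>Y B)"
    using eps by (simp add: MY.P.emeasure_eq_measure ennreal_mult)
  finally show ?thesis
    using eps by (simp add: PI.emeasure_eq_measure)
qed

lemma margX_lower: "A \<in> sets \<mu>X \<Longrightarrow> measure \<mu>X A - \<epsilon> \<le> measure \<pi> (A \<times> Y)"
proof -
  assume A: "A \<in> sets \<mu>X"
  have AX: "A \<subseteq> X" using sets.sets_into_space[OF A] MX.space_eq by simp
  have C: "X - A \<in> sets \<mu>X" using A X_sets by blast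
  have "measure \<pi> ((X - A) \<times> Y) \<le> (1 + \<epsilon>) * measure \<mu>X (X - A)" by (rule margX[OF C])
  moreover have "measure \<mu>X (X - A) = 1 - measure \<mu>X A"
    using MX.P.prob_compl[OF A] MX.space_eq by simp
  ultimately have "measure \<pi> ((X - A) \<times> Y) \<le> (1 + \<epsilon>) * (1 - measure \<mu>X A)" by simp
  moreover have "measure \<pi> (A \<times> Y) + measure \<pi> ((X - A) \<times> Y) = 1"
  proof -
    have "measure \<pi> (A \<times> Y \<union> (X - A) \<times> Y) = measure \<pi> (A \<times> Y) + measure \<pi> ((X - A) \<times> Y)"
      using A C Y_sets plan_sets by (intro PI.finite_measure_Union) auto
    moreover have "A \<times> Y \<union> (X - A) \<times> Y = space \<pi>" using AX space_plan[OF plan_sets] by auto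
    ultimately show ?thesis using PI.prob_space by simp
  qed
  moreover have "0 \<le> measure \<mu>X A" "measure \<mu>X A \<le> 1" by auto
  moreover have "(1 + \<epsilon>) * (1 - measure \<mu>X A) = (1 - measure \<mu>X A) + \<epsilon> * (1 - measure \<mu>X A)"
    by (simp add: algebra_simps)
  moreover have "\<epsilon> * (1 - measure \<mu>X A) \<le> \<epsilon>"
    using eps by (intro mult_left_le) auto
  ultimately show ?thesis by linarith
qed

lemma margY_lower: "B \<in> sets \<mu>Y \<Longrightarrow> measure \<mu>Y B - \<epsilon> \<le> measure \<pi> (X \<times> B)"
proof -
  assume B: "B \<in> sets \<mu>Y"
  have BY: "B \<subseteq> Y" using sets.sets_into_space[OF B] MY.space_eq by simp
  have C: "Y - B \<in> sets \<mu>Y" using B Y_sets by blast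
  have "measure \<pi> (X \<times> (Y - B)) \<le> (1 + \<epsilon>) * measure \<mu>Y (Y - B)" by (rule margY[OF C])
  moreover have "measure \<mu>Y (Y - B) = 1 - measure \<mu>Y B"
    using MY.P.prob_compl[OF B] MY.space_eq by simp
  ultimately have "measure \<pi> (X \<times> (Y - B)) \<le> (1 + \<epsilon>) * (1 - measure \<mu>Y B)" by simp
  moreover have "measure \<pi> (X \<times> B) + measure \<pi> (X \<times> (Y - B)) = 1"
  proof -
    have "measure \<pi> (X \<times> B \<union> X \<times> (Y - B)) = measure \<pi> (X \<times> B) + measure \<pi> (X \<times> (Y - B))"
      using B C X_sets plan_sets by (intro PI.finite_measure_Union) auto
    moreover have "X \<times> B \<union> X \<times> (Y - B) = space \<pi>" using BY space_plan[OF plan_sets] by auto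
    ultimately show ?thesis using PI.prob_space by simp
  qed
  moreover have "0 \<le> measure \<mu>Y B" "measure \<mu>Y B \<le> 1" by auto
  moreover have "(1 + \<epsilon>) * (1 - measure \<mu>Y B) = (1 - measure \<mu>Y B) + \<epsilon> * (1 - measure \<mu>Y B)"
    by (simp add: algebra_simps)
  moreover have "\<epsilon> * (1 - measure \<mu>Y B) \<le> \<epsilon>"
    using eps by (intro mult_left_le) auto
  ultimately show ?thesis by linarith
qed

end

end

lemma dist_gap_eq: "dist_gap dX dY = (\<lambda>z. \<bar>dX (fst (fst z)) (fst (snd z)) - dY (snd (fst z)) (snd (snd z))\<bar>)"
proof (rule ext)
  fix z :: "('a \<times> 'b) \<times> ('a \<times> 'b)"
  obtain x y x' y' where "z = ((x, y), (x', y'))" by (cases z) auto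
  then show "dist_gap dX dY z = \<bar>dX (fst (fst z)) (fst (snd z)) - dY (snd (fst z)) (snd (snd z))\<bar>" by simp
qed

context pmm2
begin

lemma gap_meas0: "dist_gap dX dY \<in> borel_measurable ((\<mu>X \<Otimes>\<^sub>M \<mu>Y) \<Otimes>\<^sub>M (\<mu>X \<Otimes>\<^sub>M \<mu>Y))"
proof -
  let ?R = "(\<mu>X \<Otimes>\<^sub>M \<mu>Y) \<Otimes>\<^sub>M (\<mu>X \<Otimes>\<^sub>M \<mu>Y)"
  have ff: "(\<lambda>z. fst (fst z)) \<in> measurable ?R \<mu>X"
    using measurable_compose[OF measurable_fst measurable_fst] by (simp add: o_def)
  have fs: "(\<lambda>z. fst (snd z)) \<in> measurable ?R \<mu>X"
    using measurable_compose[OF measurable_snd measurable_fst] by (simp add: o_def)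
  have sf: "(\<lambda>z. snd (fst z)) \<in> measurable ?R \<mu>Y"
    using measurable_compose[OF measurable_fst measurable_snd] by (simp add: o_def)
  have ss: "(\<lambda>z. snd (snd z)) \<in> measurable ?R \<mu>Y"
    using measurable_compose[OF measurable_snd measurable_snd] by (simp add: o_def)
  have PX: "(\<lambda>z. (fst (fst z), fst (snd z))) \<in> measurable ?R (\<mu>X \<Otimes>\<^sub>M \<mu>X)"
    by (rule measurable_Pair[OF ff fs])
  have PY: "(\<lambda>z. (snd (fst z), snd (snd z))) \<in> measurable ?R (\<mu>Y \<Otimes>\<^sub>M \<mu>Y)"
    by (rule measurable_Pair[OF sf ss])
  have hX: "(\<lambda>z. dX (fst (fst z)) (fst (snd z))) \<in> borel_measurable ?R"
    using measurable_compose[OF PX MX.dist_meas_prod] by (simp add: o_def)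
  have hY: "(\<lambda>z. dY (snd (fst z)) (snd (snd z))) \<in> borel_measurable ?R"
    using measurable_compose[OF PY MY.dist_meas_prod] by (simp add: o_def)
  show ?thesis unfolding dist_gap_eq
    by (rule borel_measurable_abs[OF borel_measurable_diff[OF hX hY]])
qed

lemma gap_meas:
  assumes S: "sets \<pi> = sets (\<mu>X \<Otimes>\<^sub>M \<mu>Y)"
  shows "dist_gap dX dY \<in> borel_measurable (\<pi> \<Otimes>\<^sub>M \<pi>)"
proof -
  have S2: "sets (\<pi> \<Otimes>\<^sub>M \<pi>) = sets ((\<mu>X \<Otimes>\<^sub>M \<mu>Y) \<Otimes>\<^sub>M (\<mu>X \<Otimes>\<^sub>M \<mu>Y))"
    by (rule sets_pair_measure_cong[OF S S])
  show ?thesis using gap_meas0 unfolding measurable_cong_sets[OF S2 refl] .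
qed

lemma exists_adm_bound:
  assumes k: "0 < k" and p: "1 \<le> p"
  shows "\<exists>\<epsilon>\<ge>0. PGW_eps dX \<mu>X dY \<mu>Y \<epsilon> p \<le> ennreal (k * \<epsilon>)"
proof -
  obtain DX where DX: "0 \<le> DX" "\<And>x y. x \<in> X \<Longrightarrow> y \<in> X \<Longrightarrow> dX x y \<le> DX" using MX.bounded by blast
  obtain DY where DY: "0 \<le> DY" "\<And>x y. x \<in> Y \<Longrightarrow> y \<in> Y \<Longrightarrow> dY x y \<le> DY" using MY.bounded by blast
  define D where "D = DX + DY"
  define \<epsilon> where "\<epsilon> = D / k"
  have D0: "0 \<le> D" using DX DY by (simp add: D_def)
  have e0: "0 \<le> \<epsilon>" using D0 k by (simp add: \<epsilon>_def)
  have ke: "k * \<epsilon> = D" using k by (simp add: \<epsilon>_def)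
  define \<pi> where "\<pi> = \<mu>X \<Otimes>\<^sub>M \<mu>Y"
  have Pp: "prob_space \<pi>" unfolding \<pi>_def by (rule prob_space_pair[OF MX.prob MY.prob])
  have S: "sets \<pi> = sets (\<mu>X \<Otimes>\<^sub>M \<mu>Y)" by (simp add: \<pi>_def)
  have c1: "x \<le> ennreal (1 + \<epsilon>) * x" for x :: ennreal
  proof -
    have "1 \<le> ennreal (1 + \<epsilon>)" using e0 by simp
    then have "1 * x \<le> ennreal (1 + \<epsilon>) * x" by (rule mult_right_mono) simp
    then show ?thesis by simp
  qed
  have adm: "pgw_admissible \<mu>X \<mu>Y \<epsilon> \<pi>"
    unfolding pgw_admissible_def
  proof (intro conjI ballI)
    show "prob_space \<pi>" by fact
    show "sets \<pi> = sets (\<mu>X \<Otimes>\<^sub>M \<mu>Y)" by fact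
  next
    fix A assume A: "A \<in> sets \<mu>X"
    have "emeasure (distr \<pi> \<mu>X fst) A = emeasure \<pi> (A \<times> Y)" by (rule distr_fst_eq[OF S A])
    also have "\<dots> = emeasure \<mu>X A * emeasure \<mu>Y Y"
      unfolding \<pi>_def by (rule MY.P.emeasure_pair_measure_Times[OF A Y_sets])
    also have "\<dots> = emeasure \<mu>X A" using MY.P.emeasure_space_1 MY.space_eq by simp
    finally show "emeasure (distr \<pi> \<mu>X fst) A \<le> ennreal (1 + \<epsilon>) * emeasure \<mu>X A"
      using c1 by simp
  next
    fix B assume B: "B \<in> sets \<mu>Y"
    have "emeasure (distr \<pi> \<mu>Y snd) B = emeasure \<pi> (X \<times> B)" by (rule distr_snd_eq[OF S B])
    also have "\<dots> = emeasure \<mu>X X * emeasure \<mu>Y B"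
      unfolding \<pi>_def by (rule MY.P.emeasure_pair_measure_Times[OF X_sets B])
    also have "\<dots> = emeasure \<mu>Y B" using MX.P.emeasure_space_1 MX.space_eq by simp
    finally show "emeasure (distr \<pi> \<mu>Y snd) B \<le> ennreal (1 + \<epsilon>) * emeasure \<mu>Y B"
      using c1 by simp
  qed
  have AE: "AE z in \<pi> \<Otimes>\<^sub>M \<pi>. dist_gap dX dY z \<le> D"
  proof (rule AE_I2)
    fix z assume z: "z \<in> space (\<pi> \<Otimes>\<^sub>M \<pi>)"
    obtain x y x' y' where zz: "z = ((x, y), (x', y'))" by (cases z) auto
    have "x \<in> X" "y \<in> Y" "x' \<in> X" "y' \<in> Y"
      using z zz by (auto simp: space_pair_measure \<pi>_def MX.space_eq MY.space_eq)
    then have "dX x x' \<le> DX" "dY y y' \<le> DY" using DX DY by auto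
    then have "\<bar>dX x x' - dY y y'\<bar> \<le> DX + DY"
      unfolding abs_le_iff using MX.nonneg[of x x'] MY.nonneg[of y y'] by linarith
    then show "dist_gap dX dY z \<le> D" using zz by (simp add: D_def)
  qed
  have "lp_distortion dX dY p \<pi> \<le> ennreal D"
    by (rule lp_upper[OF Pp D0 gap_meas[OF S] AE p])
  moreover have "PGW_eps dX \<mu>X dY \<mu>Y \<epsilon> p \<le> lp_distortion dX dY p \<pi>"
    unfolding PGW_eps_def using adm by (intro Inf_lower) blast
  ultimately show ?thesis using e0 ke by (intro exI[of _ \<epsilon>]) auto
qed

end

context pmm2
begin

lemma iso_zero:
  assumes iso: "pmm_isomorphic X dX \<mu>X Y dY \<mu>Y" and p: "1 \<le> p"
  shows "PGW_eps dX \<mu>X dY \<mu>Y 0 p = 0"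
proof -
  obtain f where bij: "bij_betw f X Y" and isom: "\<And>x x'. x \<in> X \<Longrightarrow> x' \<in> X \<Longrightarrow> dY (f x) (f x') = dX x x'"
    and fm: "f \<in> measurable \<mu>X \<mu>Y" and fd: "distr \<mu>X \<mu>Y f = \<mu>Y"
    using iso unfolding pmm_isomorphic_def by blast
  have fY: "x \<in> X \<Longrightarrow> f x \<in> Y" for x using bij by (auto simp: bij_betw_def)
  define h where "h = (\<lambda>x. (x, f x))"
  have hm: "h \<in> measurable \<mu>X (\<mu>X \<Otimes>\<^sub>M \<mu>Y)"
    unfolding h_def by (rule measurable_Pair[OF measurable_ident_sets[OF refl] fm])
  define \<pi> where "\<pi> = distr \<mu>X (\<mu>X \<Otimes>\<^sub>M \<mu>Y) h"
  have Pp: "prob_space \<pi>" unfolding \<pi>_def by (rule MX.P.prob_space_distr[OF hm])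
  interpret PI: prob_space \<pi> by fact
  have S: "sets \<pi> = sets (\<mu>X \<Otimes>\<^sub>M \<mu>Y)" by (simp add: \<pi>_def)
  have adm: "pgw_admissible \<mu>X \<mu>Y 0 \<pi>"
    unfolding pgw_admissible_def
  proof (intro conjI ballI)
    show "prob_space \<pi>" by fact
    show "sets \<pi> = sets (\<mu>X \<Otimes>\<^sub>M \<mu>Y)" by fact
  next
    fix A assume A: "A \<in> sets \<mu>X"
    have AX: "A \<subseteq> X" using sets.sets_into_space[OF A] MX.space_eq by simp
    have "emeasure (distr \<pi> \<mu>X fst) A = emeasure \<pi> (A \<times> Y)" by (rule distr_fst_eq[OF S A])
    also have "\<dots> = emeasure \<mu>X (h -` (A \<times> Y) \<inter> space \<mu>X)"
      unfolding \<pi>_def using A Y_sets by (intro emeasure_distr[OF hm]) auto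
    also have "h -` (A \<times> Y) \<inter> space \<mu>X = A" using AX fY by (auto simp: h_def MX.space_eq)
    finally show "emeasure (distr \<pi> \<mu>X fst) A \<le> ennreal (1 + 0) * emeasure \<mu>X A" by simp
  next
    fix B assume B: "B \<in> sets \<mu>Y"
    have "emeasure (distr \<pi> \<mu>Y snd) B = emeasure \<pi> (X \<times> B)" by (rule distr_snd_eq[OF S B])
    also have "\<dots> = emeasure \<mu>X (h -` (X \<times> B) \<inter> space \<mu>X)"
      unfolding \<pi>_def using B X_sets by (intro emeasure_distr[OF hm]) auto
    also have "h -` (X \<times> B) \<inter> space \<mu>X = f -` B \<inter> space \<mu>X" by (auto simp: h_def MX.space_eq)
    also have "emeasure \<mu>X (f -` B \<inter> space \<mu>X) = emeasure (distr \<mu>X \<mu>Y f) B"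
      using B by (intro emeasure_distr[OF fm, symmetric])
    also have "\<dots> = emeasure \<mu>Y B" using fd by simp
    finally show "emeasure (distr \<pi> \<mu>Y snd) B \<le> ennreal (1 + 0) * emeasure \<mu>Y B" by simp
  qed
  define G where "G = {z \<in> space (\<mu>X \<Otimes>\<^sub>M \<mu>Y). dY (snd z) (f (fst z)) = 0}"
  have Gs: "G \<in> sets (\<mu>X \<Otimes>\<^sub>M \<mu>Y)"
  proof -
    have q: "(\<lambda>z. (snd z, f (fst z))) \<in> measurable (\<mu>X \<Otimes>\<^sub>M \<mu>Y) (\<mu>Y \<Otimes>\<^sub>M \<mu>Y)"
      by (rule measurable_Pair[OF measurable_snd measurable_compose[OF measurable_fst fm]])
    have "(\<lambda>z. dY (snd z) (f (fst z))) \<in> borel_measurable (\<mu>X \<Otimes>\<^sub>M \<mu>Y)"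
      using measurable_compose[OF q MY.dist_meas_prod] by (simp add: o_def)
    then have "(\<lambda>z. dY (snd z) (f (fst z))) -` {0} \<inter> space (\<mu>X \<Otimes>\<^sub>M \<mu>Y) \<in> sets (\<mu>X \<Otimes>\<^sub>M \<mu>Y)"
      by (rule measurable_sets) simp
    moreover have "(\<lambda>z. dY (snd z) (f (fst z))) -` {0} \<inter> space (\<mu>X \<Otimes>\<^sub>M \<mu>Y) = G"
      by (auto simp: G_def)
    ultimately show ?thesis by simp
  qed
  have Gsp: "G \<subseteq> space (\<mu>X \<Otimes>\<^sub>M \<mu>Y)" by (auto simp: G_def)
  have AEG: "AE z in \<pi>. z \<in> G"
  proof -
    have "{z \<in> space (\<mu>X \<Otimes>\<^sub>M \<mu>Y). z \<in> G} \<in> sets (\<mu>X \<Otimes>\<^sub>M \<mu>Y)" using Gs Gsp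
      by (simp add: Int_absorb1 Collect_conj_eq Int_commute)
    moreover have "AE x in \<mu>X. h x \<in> G"
    proof (rule AE_I2)
      fix x assume "x \<in> space \<mu>X"
      then have x: "x \<in> X" by (simp add: MX.space_eq)
      then show "h x \<in> G" using fY[OF x] by (auto simp: G_def h_def space_prod)
    qed
    ultimately show ?thesis unfolding \<pi>_def by (subst AE_distr_iff[OF hm]) auto
  qed
  have gm: "dist_gap dX dY \<in> borel_measurable (\<pi> \<Otimes>\<^sub>M \<pi>)" by (rule gap_meas[OF S])
  interpret PS: pair_sigma_finite \<pi> \<pi>
    by (intro pair_sigma_finite.intro PI.sigma_finite_measure_axioms)
  have AE: "AE z in \<pi> \<Otimes>\<^sub>M \<pi>. dist_gap dX dY z \<le> 0"
  proof (rule PS.AE_pair_measure)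
    have "dist_gap dX dY -` {..0} \<inter> space (\<pi> \<Otimes>\<^sub>M \<pi>) \<in> sets (\<pi> \<Otimes>\<^sub>M \<pi>)"
      by (rule measurable_sets[OF gm]) simp
    moreover have "dist_gap dX dY -` {..0} \<inter> space (\<pi> \<Otimes>\<^sub>M \<pi>) = {z \<in> space (\<pi> \<Otimes>\<^sub>M \<pi>). dist_gap dX dY z \<le> 0}"
      by auto
    ultimately show "{z \<in> space (\<pi> \<Otimes>\<^sub>M \<pi>). dist_gap dX dY z \<le> 0} \<in> sets (\<pi> \<Otimes>\<^sub>M \<pi>)" by simp
  next
    show "AE x in \<pi>. AE y in \<pi>. dist_gap dX dY (x, y) \<le> 0"
      using AEG
    proof (rule eventually_mono)
      fix x assume xG: "x \<in> G"
      show "AE y in \<pi>. dist_gap dX dY (x, y) \<le> 0"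
        using AEG
      proof (rule eventually_mono)
        fix y assume yG: "y \<in> G"
        obtain a b where x: "x = (a, b)" by (cases x)
        obtain a' b' where y: "y = (a', b')" by (cases y)
        have a: "a \<in> X" "b \<in> Y" "dY b (f a) = 0" using xG x by (auto simp: G_def space_prod)
        have a': "a' \<in> X" "b' \<in> Y" "dY b' (f a') = 0" using yG y by (auto simp: G_def space_prod)
        have "b = f a" using a fY[OF a(1)] MY.zero by blast
        moreover have "b' = f a'" using a' fY[OF a'(1)] MY.zero by blast
        ultimately show "dist_gap dX dY (x, y) \<le> 0" using x y isom a(1) a'(1) by simp
      qed
    qed
  qed
  have "lp_distortion dX dY p \<pi> \<le> ennreal 0"
    by (rule lp_upper[OF Pp order_refl gm AE p])
  moreover have "PGW_eps dX \<mu>X dY \<mu>Y 0 p \<le> lp_distortion dX dY p \<pi>"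
    unfolding PGW_eps_def using adm by (intro Inf_lower) blast
  ultimately show ?thesis by simp
qed

end

context pmm2
begin

lemma box_sets: "sets \<pi> = sets (\<mu>X \<Otimes>\<^sub>M \<mu>Y) \<Longrightarrow> MX.mball x r \<times> MY.mball y s \<in> sets \<pi>"
  by simp

lemma gap_box:
  assumes u: "u \<in> MX.mball x r" "u' \<in> MX.mball x' r" and v: "v \<in> MY.mball y r" "v' \<in> MY.mball y' r"
  shows "\<bar>dX x x' - dY y y'\<bar> - 4 * r \<le> dist_gap dX dY ((u, v), (u', v'))"
proof -
  have m: "x \<in> X" "u \<in> X" "x' \<in> X" "u' \<in> X" "y \<in> Y" "v \<in> Y" "y' \<in> Y" "v' \<in> Y"
    and dd: "dX x u < r" "dX x' u' < r" "dY y v < r" "dY y' v' < r" using u v by auto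
  have t1: "dX x x' \<le> dX x u + dX u u' + dX u' x'"
    using MX.triangle[of x u x'] MX.triangle[of u u' x'] m by simp
  have t2: "dX u u' \<le> dX u x + dX x x' + dX x' u'"
    using MX.triangle[of u x u'] MX.triangle[of x x' u'] m by simp
  have t3: "dY y y' \<le> dY y v + dY v v' + dY v' y'"
    using MY.triangle[of y v y'] MY.triangle[of v v' y'] m by simp
  have t4: "dY v v' \<le> dY v y + dY y y' + dY y' v'"
    using MY.triangle[of v y v'] MY.triangle[of y y' v'] m by simp
  have c: "dX u x = dX x u" "dX u' x' = dX x' u'" "dY v y = dY y v" "dY v' y' = dY y' v'"
    using MX.commute MY.commute by auto
  show ?thesis using t1 t2 t3 t4 c dd by simp
qed

lemma compat:
  assumes adm: "pgw_admissible \<mu>X \<mu>Y \<epsilon> \<pi>" and p: "1 \<le> p"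
    and L: "lp_distortion dX dY p \<pi> \<le> ennreal L" "0 \<le> L" and c: "0 < c"
    and g1: "c \<le> measure \<pi> (MX.mball x r \<times> MY.mball y r)"
    and g2: "c \<le> measure \<pi> (MX.mball x' r \<times> MY.mball y' r)"
  shows "\<bar>dX x x' - dY y y'\<bar> \<le> 4 * r + L / c^2"
proof (cases "\<bar>dX x x' - dY y y'\<bar> - 4 * r \<le> 0")
  case True
  have "0 \<le> L / c^2" using L c by simp
  then show ?thesis using True by linarith
next
  case False
  define a where "a = \<bar>dX x x' - dY y y'\<bar> - 4 * r"
  have a0: "0 \<le> a" using False by (simp add: a_def)
  have S: "sets \<pi> = sets (\<mu>X \<Otimes>\<^sub>M \<mu>Y)" and P: "prob_space \<pi>" using adm by (auto simp: pgw_admissible_def)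
  have "ennreal (a * c * c) \<le> lp_distortion dX dY p \<pi>"
  proof (rule lp_lower[OF P box_sets[OF S] box_sets[OF S] a0 _ g1 _ g2 _ p])
    show "0 \<le> c" using c by simp
    show "0 \<le> c" using c by simp
  next
    fix z1 z2 assume z1: "z1 \<in> MX.mball x r \<times> MY.mball y r" and z2: "z2 \<in> MX.mball x' r \<times> MY.mball y' r"
    obtain u v where uv: "z1 = (u, v)" by (cases z1)
    obtain u' v' where uv': "z2 = (u', v')" by (cases z2)
    show "a \<le> dist_gap dX dY (z1, z2)"
      unfolding a_def uv uv' using z1 z2 uv uv' by (intro gap_box) auto
  qed
  also have "\<dots> \<le> ennreal L" by (rule L(1))
  finally have "a * c * c \<le> L" using L(2) by (simp add: ennreal_le_iff)
  then have "a \<le> L / c^2" using c by (simp add: pos_le_divide_eq power2_eq_square mult.assoc)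
  then show ?thesis by (simp add: a_def)
qed

end

lemma div_le_self_ge1: "0 \<le> (a::real) \<Longrightarrow> 1 \<le> b \<Longrightarrow> a / b \<le> a"
proof -
  assume a: "0 \<le> a" and b: "1 \<le> b"
  have "a / b \<le> a / 1" using a b by (intro divide_left_mono) auto
  then show ?thesis by simp
qed

context pmm2
begin

lemma scale:
  assumes small: "\<And>t. 0 < t \<Longrightarrow> \<exists>\<epsilon> \<pi>. 0 \<le> \<epsilon> \<and> \<epsilon> \<le> t \<and> pgw_admissible \<mu>X \<mu>Y \<epsilon> \<pi> \<and> lp_distortion dX dY p \<pi> \<le> ennreal t"
    and p: "1 \<le> p" and r: "0 < r" "r \<le> 1/2"
  shows "\<exists>\<pi> \<epsilon> c. 0 < c \<and> pgw_admissible \<mu>X \<mu>Y \<epsilon> \<pi> \<and> 0 \<le> \<epsilon> \<and> \<epsilon> \<le> r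
     \<and> (\<forall>x\<in>X. \<exists>y\<in>Y. c \<le> measure \<pi> (MX.mball x r \<times> MY.mball y r))
     \<and> (\<forall>y\<in>Y. \<exists>x\<in>X. c \<le> measure \<pi> (MX.mball x r \<times> MY.mball y r))
     \<and> (\<forall>x x' y y'. c \<le> measure \<pi> (MX.mball x r \<times> MY.mball y r) \<longrightarrow>
            c \<le> measure \<pi> (MX.mball x' r \<times> MY.mball y' r) \<longrightarrow> \<bar>dX x x' - dY y y'\<bar> \<le> 5 * r)
     \<and> (\<exists>B\<in>sets \<pi>. measure \<pi> B \<le> r \<and>
            (\<forall>x\<in>X. \<forall>y\<in>Y. (x, y) \<notin> B \<longrightarrow> c \<le> measure \<pi> (MX.mball x r \<times> MY.mball y r)))"
proof -
  have r2: "0 < r / 2" using r by simp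
  obtain NX where NX: "finite NX" "NX \<noteq> {}" "NX \<subseteq> X" "X \<subseteq> (\<Union>s\<in>NX. MX.mball s (r/2))"
    using MX.nets_ne[OF r2] by blast
  obtain NY where NY: "finite NY" "NY \<noteq> {}" "NY \<subseteq> Y" "Y \<subseteq> (\<Union>s\<in>NY. MY.mball s (r/2))"
    using MY.nets_ne[OF r2] by blast
  obtain \<rho>X where \<rho>X: "\<rho>X > 0" "\<And>x. x \<in> X \<Longrightarrow> \<rho>X \<le> measure \<mu>X (MX.mball x (r/2))"
    using MX.ball_lower[OF r2] by blast
  obtain \<rho>Y where \<rho>Y: "\<rho>Y > 0" "\<And>y. y \<in> Y \<Longrightarrow> \<rho>Y \<le> measure \<mu>Y (MY.mball y (r/2))"
    using MY.ball_lower[OF r2] by blast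
  define \<rho> where "\<rho> = min \<rho>X \<rho>Y"
  have \<rho>0: "0 < \<rho>" using \<rho>X \<rho>Y by (simp add: \<rho>_def)
  have \<rho>1: "\<rho> \<le> 1"
  proof -
    obtain x where "x \<in> X" using MX.M_ne by blast
    then have "\<rho>X \<le> measure \<mu>X (MX.mball x (r/2))" by (rule \<rho>X(2))
    also have "\<dots> \<le> 1" by (rule MX.P.prob_le_1)
    finally show ?thesis by (simp add: \<rho>_def)
  qed
  have ballX: "\<rho> \<le> measure \<mu>X (MX.mball x r)" if "x \<in> X" for x
  proof -
    have "measure \<mu>X (MX.mball x (r/2)) \<le> measure \<mu>X (MX.mball x r)"
      using r by (intro MX.P.finite_measure_mono MX.mball_subset_concentric) auto
    then show ?thesis using \<rho>X(2)[OF that] by (simp add: \<rho>_def)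
  qed
  have ballY: "\<rho> \<le> measure \<mu>Y (MY.mball y r)" if "y \<in> Y" for y
  proof -
    have "measure \<mu>Y (MY.mball y (r/2)) \<le> measure \<mu>Y (MY.mball y r)"
      using r by (intro MY.P.finite_measure_mono MY.mball_subset_concentric) auto
    then show ?thesis using \<rho>Y(2)[OF that] by (simp add: \<rho>_def)
  qed
  define nX where "nX = real (card NX)"
  define nY where "nY = real (card NY)"
  have nX1: "1 \<le> nX" using NX(1,2) by (simp add: nX_def Suc_le_eq card_gt_0_iff)
  have nY1: "1 \<le> nY" using NY(1,2) by (simp add: nY_def Suc_le_eq card_gt_0_iff)
  define c where "c = \<rho> * r / (nX * nY)"
  have c0: "0 < c" using \<rho>0 r nX1 nY1 by (simp add: c_def)
  have cnn: "nX * nY * c = \<rho> * r" using nX1 nY1 by (simp add: c_def)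
  have c1: "c \<le> 1"
  proof -
    have "1 * 1 \<le> nX * nY" using nX1 nY1 by (intro mult_mono) auto
    then have "c \<le> \<rho> * r" unfolding c_def using \<rho>0 r
      by (intro div_le_self_ge1) auto
    also have "\<rho> * r \<le> 1 * 1" using \<rho>0 \<rho>1 r by (intro mult_mono) auto
    finally show ?thesis by simp
  qed
  define t where "t = min (\<rho> / 2) (r * c^2)"
  have t0: "0 < t" using \<rho>0 r c0 by (simp add: t_def)
  obtain \<epsilon> \<pi> where e0: "0 \<le> \<epsilon>" and et: "\<epsilon> \<le> t" and adm: "pgw_admissible \<mu>X \<mu>Y \<epsilon> \<pi>"
    and L: "lp_distortion dX dY p \<pi> \<le> ennreal t"
    using small[OF t0] by blast
  have S: "sets \<pi> = sets (\<mu>X \<Otimes>\<^sub>M \<mu>Y)" and P: "prob_space \<pi>" using adm by (auto simp: pgw_admissible_def)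
  interpret PI: prob_space \<pi> by fact
  have c21: "c^2 \<le> 1" using c0 c1 by (simp add: power_le_one)
  have er: "\<epsilon> \<le> r"
  proof -
    have "r * c^2 \<le> r * 1" using r c21 by (intro mult_left_mono) auto
    then show ?thesis using et by (simp add: t_def)
  qed
  have erho: "\<epsilon> \<le> \<rho> / 2" using et by (simp add: t_def)
  have comp: "\<bar>dX x x' - dY y y'\<bar> \<le> 5 * r"
    if "c \<le> measure \<pi> (MX.mball x r \<times> MY.mball y r)" "c \<le> measure \<pi> (MX.mball x' r \<times> MY.mball y' r)"
    for x x' y y'
  proof -
    have "\<bar>dX x x' - dY y y'\<bar> \<le> 4 * r + t / c^2"
      by (rule compat[OF adm p L _ c0 that]) (use t0 in simp)
    moreover have "t / c^2 \<le> r" using c0 by (simp add: t_def pos_divide_le_eq)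
    ultimately show ?thesis by linarith
  qed
  have partX: "\<exists>y\<in>Y. c \<le> measure \<pi> (MX.mball x r \<times> MY.mball y r)" if x: "x \<in> X" for x
  proof (rule ccontr)
    assume "\<not> ?thesis"
    then have lt: "\<And>u. u \<in> NY \<Longrightarrow> measure \<pi> (MX.mball x r \<times> MY.mball u r) < c" using NY(3) by force
    have "measure \<mu>X (MX.mball x r) - \<epsilon> \<le> measure \<pi> (MX.mball x r \<times> Y)"
      by (rule margX_lower[OF adm e0]) simp
    then have A: "\<rho> / 2 \<le> measure \<pi> (MX.mball x r \<times> Y)" using ballX[OF x] erho by linarith
    have sub: "MX.mball x r \<times> Y \<subseteq> (\<Union>u\<in>NY. MX.mball x r \<times> MY.mball u r)"
    proof
      fix z assume z: "z \<in> MX.mball x r \<times> Y"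
      then obtain a b where ab: "z = (a, b)" "a \<in> MX.mball x r" "b \<in> Y" by blast
      then have "b \<in> (\<Union>s\<in>NY. MY.mball s (r/2))" using NY(4) by blast
      then obtain u where u: "u \<in> NY" "b \<in> MY.mball u (r/2)" by blast
      then have "b \<in> MY.mball u r" using MY.mball_subset_concentric[of "r/2" r u] r by auto
      then show "z \<in> (\<Union>u\<in>NY. MX.mball x r \<times> MY.mball u r)" using ab u by blast
    qed
    have "measure \<pi> (MX.mball x r \<times> Y) \<le> measure \<pi> (\<Union>u\<in>NY. MX.mball x r \<times> MY.mball u r)"
    proof -
      have U: "(\<Union>u\<in>NY. MX.mball x r \<times> MY.mball u r) \<in> sets \<pi>"
        by (rule sets.finite_UN[OF NY(1)]) (simp add: S)
      show ?thesis by (rule PI.finite_measure_mono[OF sub U])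
    qed
    also have "\<dots> \<le> (\<Sum>u\<in>NY. measure \<pi> (MX.mball x r \<times> MY.mball u r))"
      by (rule PI.finite_measure_subadditive_finite[OF NY(1)]) (simp add: S image_subset_iff)
    also have "\<dots> < (\<Sum>u\<in>NY. c)"
      using NY(1,2) lt by (intro sum_strict_mono) auto
    also have "\<dots> = nY * c" by (simp add: nY_def)
    also have "\<dots> \<le> \<rho> / 2"
    proof -
      have "nY * c = \<rho> * r / nX" using nX1 nY1 by (simp add: c_def)
      also have "\<dots> \<le> \<rho> * r" using \<rho>0 r nX1 by (intro div_le_self_ge1) auto
      also have "\<dots> \<le> \<rho> * (1/2)" using \<rho>0 r by (intro mult_left_mono) auto
      finally show ?thesis by simp
    qed
    finally show False using A by linarith
  qed
  have partY: "\<exists>x\<in>X. c \<le> measure \<pi> (MX.mball x r \<times> MY.mball y r)" if y: "y \<in> Y" for y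
  proof (rule ccontr)
    assume "\<not> ?thesis"
    then have lt: "\<And>u. u \<in> NX \<Longrightarrow> measure \<pi> (MX.mball u r \<times> MY.mball y r) < c" using NX(3) by force
    have "measure \<mu>Y (MY.mball y r) - \<epsilon> \<le> measure \<pi> (X \<times> MY.mball y r)"
      by (rule margY_lower[OF adm e0]) simp
    then have A: "\<rho> / 2 \<le> measure \<pi> (X \<times> MY.mball y r)" using ballY[OF y] erho by linarith
    have sub: "X \<times> MY.mball y r \<subseteq> (\<Union>u\<in>NX. MX.mball u r \<times> MY.mball y r)"
    proof
      fix z assume z: "z \<in> X \<times> MY.mball y r"
      then obtain a b where ab: "z = (a, b)" "a \<in> X" "b \<in> MY.mball y r" by blast
      then have "a \<in> (\<Union>s\<in>NX. MX.mball s (r/2))" using NX(4) by blast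
      then obtain u where u: "u \<in> NX" "a \<in> MX.mball u (r/2)" by blast
      then have "a \<in> MX.mball u r" using MX.mball_subset_concentric[of "r/2" r u] r by auto
      then show "z \<in> (\<Union>u\<in>NX. MX.mball u r \<times> MY.mball y r)" using ab u by blast
    qed
    have "measure \<pi> (X \<times> MY.mball y r) \<le> measure \<pi> (\<Union>u\<in>NX. MX.mball u r \<times> MY.mball y r)"
    proof -
      have U: "(\<Union>u\<in>NX. MX.mball u r \<times> MY.mball y r) \<in> sets \<pi>"
        by (rule sets.finite_UN[OF NX(1)]) (simp add: S)
      show ?thesis by (rule PI.finite_measure_mono[OF sub U])
    qed
    also have "\<dots> \<le> (\<Sum>u\<in>NX. measure \<pi> (MX.mball u r \<times> MY.mball y r))"
      by (rule PI.finite_measure_subadditive_finite[OF NX(1)]) (simp add: S image_subset_iff)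
    also have "\<dots> < (\<Sum>u\<in>NX. c)"
      using NX(1,2) lt by (intro sum_strict_mono) auto
    also have "\<dots> = nX * c" by (simp add: nX_def)
    also have "\<dots> \<le> \<rho> / 2"
    proof -
      have "nX * c = \<rho> * r / nY" using nX1 nY1 by (simp add: c_def)
      also have "\<dots> \<le> \<rho> * r" using \<rho>0 r nY1 by (intro div_le_self_ge1) auto
      also have "\<dots> \<le> \<rho> * (1/2)" using \<rho>0 r by (intro mult_left_mono) auto
      finally show ?thesis by simp
    qed
    finally show False using A by linarith
  qed
  define I where "I = {i \<in> NX \<times> NY. measure \<pi> (MX.mball (fst i) (r/2) \<times> MY.mball (snd i) (r/2)) < c}"
  define B where "B = (\<Union>i\<in>I. MX.mball (fst i) (r/2) \<times> MY.mball (snd i) (r/2))"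
  have I: "finite I" "I \<subseteq> NX \<times> NY" using NX(1) NY(1) by (auto simp: I_def)
  have Bs: "B \<in> sets \<pi>" unfolding B_def by (rule sets.finite_UN[OF I(1)]) (simp add: S)
  have "measure \<pi> B \<le> (\<Sum>i\<in>I. measure \<pi> (MX.mball (fst i) (r/2) \<times> MY.mball (snd i) (r/2)))"
    unfolding B_def by (rule PI.finite_measure_subadditive_finite[OF I(1)]) (simp add: S image_subset_iff)
  also have "\<dots> \<le> real (card I) * c"
    by (rule sum_bounded_above) (auto simp: I_def)
  also have "\<dots> \<le> nX * nY * c"
  proof -
    have "card I \<le> card (NX \<times> NY)" using I NX(1) NY(1) by (intro card_mono) auto
    then have "card I \<le> card NX * card NY" by (simp add: card_cartesian_product)
    then have "real (card I) \<le> real (card NX * card NY)" by (rule of_nat_mono)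
    then have "real (card I) \<le> nX * nY" by (simp add: nX_def nY_def)
    then show ?thesis using c0 by (intro mult_right_mono) auto
  qed
  also have "\<dots> = \<rho> * r" by (rule cnn)
  also have "\<dots> \<le> 1 * r" using \<rho>1 r by (intro mult_right_mono) auto
  finally have Bm: "measure \<pi> B \<le> r" by simp
  have Bgood: "c \<le> measure \<pi> (MX.mball x r \<times> MY.mball y r)" if "x \<in> X" "y \<in> Y" "(x, y) \<notin> B" for x y
  proof -
    have "x \<in> (\<Union>s\<in>NX. MX.mball s (r/2))" using NX(4) that(1) by blast
    then obtain s where s: "s \<in> NX" "x \<in> MX.mball s (r/2)" by blast
    have "y \<in> (\<Union>s\<in>NY. MY.mball s (r/2))" using NY(4) that(2) by blast
    then obtain u where u: "u \<in> NY" "y \<in> MY.mball u (r/2)" by blast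
    have "(s, u) \<notin> I"
    proof
      assume "(s, u) \<in> I"
      then have "(x, y) \<in> B" unfolding B_def using s u by force
      then show False using that(3) by blast
    qed
    then have "c \<le> measure \<pi> (MX.mball s (r/2) \<times> MY.mball u (r/2))" using s u by (auto simp: I_def)
    also have "\<dots> \<le> measure \<pi> (MX.mball x r \<times> MY.mball y r)"
    proof (rule PI.finite_measure_mono)
      have "MX.mball s (r/2) \<subseteq> MX.mball x r" using s that(1) by (intro MX.mball_subset) auto
      moreover have "MY.mball u (r/2) \<subseteq> MY.mball y r" using u that(2) by (intro MY.mball_subset) auto
      ultimately show "MX.mball s (r/2) \<times> MY.mball u (r/2) \<subseteq> MX.mball x r \<times> MY.mball y r" by auto
      show "MX.mball x r \<times> MY.mball y r \<in> sets \<pi>" using S by simp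
    qed
    finally show ?thesis .
  qed
  show ?thesis
    apply (rule exI[of _ \<pi>], rule exI[of _ \<epsilon>], rule exI[of _ c])
    using c0 adm e0 er partX partY comp Bs Bm Bgood by blast
qed

end

context cpmm
begin

lemma dist_pert:
  assumes "a \<in> M" "b \<in> M" "a' \<in> M" "b' \<in> M"
  shows "\<bar>d a b - d a' b'\<bar> \<le> d a a' + d b b'"
proof -
  have "d a b \<le> d a a' + d a' b' + d b' b" using triangle[of a a' b] triangle[of a' b' b] assms by simp
  moreover have "d a' b' \<le> d a' a + d a b + d b b'" using triangle[of a' a b'] triangle[of a b b'] assms by simp
  moreover have "d b' b = d b b'" "d a' a = d a a'" using commute by auto
  ultimately show ?thesis by linarith
qed

lemma nbhd_sets: "F \<subseteq> M \<Longrightarrow> {x\<in>M. \<exists>z\<in>F. d x z < \<delta>} \<in> sets \<mu>"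
proof -
  assume FM: "F \<subseteq> M"
  have "{x\<in>M. \<exists>z\<in>F. d x z < \<delta>} = (\<Union>z\<in>F. mball z \<delta>)"
  proof (rule set_eqI)
    fix x
    show "x \<in> {x\<in>M. \<exists>z\<in>F. d x z < \<delta>} \<longleftrightarrow> x \<in> (\<Union>z\<in>F. mball z \<delta>)"
    proof
      assume "x \<in> {x\<in>M. \<exists>z\<in>F. d x z < \<delta>}"
      then obtain z where "x \<in> M" "z \<in> F" "d x z < \<delta>" by blast
      then show "x \<in> (\<Union>z\<in>F. mball z \<delta>)" using FM commute[of x z] by auto
    next
      assume "x \<in> (\<Union>z\<in>F. mball z \<delta>)"
      then obtain z where "x \<in> M" "z \<in> F" "d z x < \<delta>" by auto
      then show "x \<in> {x\<in>M. \<exists>z\<in>F. d x z < \<delta>}" using commute[of x z] by (intro CollectI conjI bexI[of _ z]) auto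
    qed
  qed
  moreover have "openin mtopology (\<Union>z\<in>F. mball z \<delta>)" by auto
  ultimately show ?thesis using open_sets by simp
qed

lemma eq_of_small: "(\<And>\<delta>. 0 < \<delta> \<Longrightarrow> \<bar>A - B\<bar> < 3 * \<delta>) \<Longrightarrow> (A::real) = B"
proof (rule ccontr)
  assume H: "\<And>\<delta>. 0 < \<delta> \<Longrightarrow> \<bar>A - B\<bar> < 3 * \<delta>" and "A \<noteq> B"
  then have "0 < \<bar>A - B\<bar> / 3" by simp
  from H[OF this] show False by simp
qed

lemma le_of_small: "(\<And>e. 0 < e \<Longrightarrow> A \<le> B + 4 * e) \<Longrightarrow> (A::real) \<le> B"
proof (rule ccontr)
  assume H: "\<And>e. 0 < e \<Longrightarrow> A \<le> B + 4 * e" and "\<not> A \<le> B"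
  then have "0 < (A - B) / 8" by simp
  from H[OF this] have 1: "A \<le> B + 4 * ((A - B) / 8)" .
  have 2: "8 * ((A - B) / 8) = A - B" by simp
  from 1 2 \<open>\<not> A \<le> B\<close> show False by linarith
qed

end

locale seqdata = pmm2 X dX \<mu>X Y dY \<mu>Y
  for X :: "'a set" and dX and \<mu>X and Y :: "'b set" and dY and \<mu>Y +
  fixes \<pi> :: "nat \<Rightarrow> ('a \<times> 'b) measure" and \<epsilon> c r :: "nat \<Rightarrow> real"
    and B :: "nat \<Rightarrow> ('a \<times> 'b) set" and U :: "nat filter"
  assumes adm: "\<And>n. pgw_admissible \<mu>X \<mu>Y (\<epsilon> n) (\<pi> n)"
    and e0: "\<And>n. 0 \<le> \<epsilon> n" and er: "\<And>n. \<epsilon> n \<le> r n"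
    and rlim: "\<And>e. 0 < e \<Longrightarrow> eventually (\<lambda>n. r n < e) U"
    and partX: "\<And>n x. x \<in> X \<Longrightarrow> \<exists>y\<in>Y. c n \<le> measure (\<pi> n) (MX.mball x (r n) \<times> MY.mball y (r n))"
    and partY: "\<And>n y. y \<in> Y \<Longrightarrow> \<exists>x\<in>X. c n \<le> measure (\<pi> n) (MX.mball x (r n) \<times> MY.mball y (r n))"
    and comp: "\<And>n x x' y y'. c n \<le> measure (\<pi> n) (MX.mball x (r n) \<times> MY.mball y (r n)) \<Longrightarrow>
            c n \<le> measure (\<pi> n) (MX.mball x' (r n) \<times> MY.mball y' (r n)) \<Longrightarrow> \<bar>dX x x' - dY y y'\<bar> \<le> 5 * r n"
    and Bs: "\<And>n. B n \<in> sets (\<pi> n)" and Bm: "\<And>n. measure (\<pi> n) (B n) \<le> r n"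
    and Bgood: "\<And>n x y. x \<in> X \<Longrightarrow> y \<in> Y \<Longrightarrow> (x, y) \<notin> B n \<Longrightarrow> c n \<le> measure (\<pi> n) (MX.mball x (r n) \<times> MY.mball y (r n))"
    and Ubot: "U \<noteq> bot" and Uultra: "\<forall>P. eventually P U \<or> eventually (\<lambda>x. \<not> P x) U"
begin

definition Gd where "Gd n x y \<longleftrightarrow> x \<in> X \<and> y \<in> Y \<and> c n \<le> measure (\<pi> n) (MX.mball x (r n) \<times> MY.mball y (r n))"

lemma Gd_comp: "Gd n x y \<Longrightarrow> Gd n x' y' \<Longrightarrow> \<bar>dX x x' - dY y y'\<bar> \<le> 5 * r n"
  unfolding Gd_def using comp by blast

lemma ev_exists: "eventually P U \<Longrightarrow> \<exists>n. P n"
  using eventually_happens Ubot by blast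

lemma r5: "0 < \<delta> \<Longrightarrow> eventually (\<lambda>n. 5 * r n < \<delta>) U"
proof -
  assume "0 < \<delta>"
  then have "eventually (\<lambda>n. r n < \<delta> / 5) U" by (intro rlim) simp
  then show ?thesis by (rule eventually_mono) simp
qed

definition yx where "yx x n = (SOME y. Gd n x y)"

lemma yx: "x \<in> X \<Longrightarrow> Gd n x (yx x n)"
proof -
  assume x: "x \<in> X"
  then obtain y where "y \<in> Y" "c n \<le> measure (\<pi> n) (MX.mball x (r n) \<times> MY.mball y (r n))" using partX by blast
  then have "Gd n x y" using x by (simp add: Gd_def)
  then show ?thesis unfolding yx_def by (rule someI)
qed

lemma yxY: "x \<in> X \<Longrightarrow> yx x n \<in> Y" using yx by (simp add: Gd_def)

definition g where "g x = (SOME l. l \<in> Y \<and> (\<forall>\<delta>>0. eventually (\<lambda>n. dY (yx x n) l < \<delta>) U))"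

lemma g: "x \<in> X \<Longrightarrow> g x \<in> Y \<and> (\<forall>\<delta>>0. eventually (\<lambda>n. dY (yx x n) (g x) < \<delta>) U)"
proof -
  assume x: "x \<in> X"
  have "\<exists>l\<in>Y. \<forall>\<delta>>0. eventually (\<lambda>n. dY (yx x n) l < \<delta>) U"
    by (rule MY.ultra_lim[OF Ubot Uultra]) (rule yxY[OF x])
  then have "\<exists>l. l \<in> Y \<and> (\<forall>\<delta>>0. eventually (\<lambda>n. dY (yx x n) l < \<delta>) U)" by blast
  then show ?thesis unfolding g_def by (rule someI_ex)
qed

lemma gY: "x \<in> X \<Longrightarrow> g x \<in> Y" using g by blast

lemma g_ev: "x \<in> X \<Longrightarrow> 0 < \<delta> \<Longrightarrow> eventually (\<lambda>n. dY (yx x n) (g x) < \<delta>) U" using g by blast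

lemma g_isom: assumes x: "x \<in> X" and x': "x' \<in> X" shows "dY (g x) (g x') = dX x x'"
proof (rule MX.eq_of_small)
  fix \<delta> :: real assume d: "0 < \<delta>"
  have "eventually (\<lambda>n. dY (yx x n) (g x) < \<delta> \<and> dY (yx x' n) (g x') < \<delta> \<and> 5 * r n < \<delta>) U"
    using eventually_conj[OF g_ev[OF x d] eventually_conj[OF g_ev[OF x' d] r5[OF d]]] .
  then obtain n where n: "dY (yx x n) (g x) < \<delta>" "dY (yx x' n) (g x') < \<delta>" "5 * r n < \<delta>"
    using ev_exists by blast
  have "\<bar>dX x x' - dY (yx x n) (yx x' n)\<bar> \<le> 5 * r n" by (rule Gd_comp[OF yx[OF x] yx[OF x']])
  moreover have "\<bar>dY (g x) (g x') - dY (yx x n) (yx x' n)\<bar> \<le> dY (g x) (yx x n) + dY (g x') (yx x' n)"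
    by (rule MY.dist_pert) (auto simp: gY x x' yxY)
  moreover have "dY (g x) (yx x n) = dY (yx x n) (g x)" "dY (g x') (yx x' n) = dY (yx x' n) (g x')"
    using MY.commute by auto
  ultimately show "\<bar>dY (g x) (g x') - dX x x'\<bar> < 3 * \<delta>" using n by linarith
qed

end

context seqdata
begin

lemma g_surj: assumes y: "y \<in> Y" shows "\<exists>x\<in>X. g x = y"
proof -
  define xy where "xy n = (SOME x. Gd n x y)" for n
  have xy: "Gd n (xy n) y" for n
  proof -
    obtain x where "x \<in> X" "c n \<le> measure (\<pi> n) (MX.mball x (r n) \<times> MY.mball y (r n))"
      using partY[OF y] by blast
    then have "Gd n x y" using y by (simp add: Gd_def)
    then show ?thesis unfolding xy_def by (rule someI)
  qed
  have xyX: "xy n \<in> X" for n using xy[of n] by (simp add: Gd_def)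
  have "\<exists>l\<in>X. \<forall>\<delta>>0. eventually (\<lambda>n. dX (xy n) l < \<delta>) U"
    by (rule MX.ultra_lim[OF Ubot Uultra xyX])
  then obtain x0 where x0: "x0 \<in> X" "\<forall>\<delta>>0. eventually (\<lambda>n. dX (xy n) x0 < \<delta>) U"
    by (elim bexE) (rule that)
  have "dY (g x0) y = 0"
  proof (rule MY.eq_of_small)
    fix \<delta> :: real assume d: "0 < \<delta>"
    have "eventually (\<lambda>n. dX (xy n) x0 < \<delta> \<and> dY (yx x0 n) (g x0) < \<delta> \<and> 5 * r n < \<delta>) U"
      using eventually_conj[OF x0(2)[rule_format, OF d] eventually_conj[OF g_ev[OF x0(1) d] r5[OF d]]] .
    then obtain n where n: "dX (xy n) x0 < \<delta>" "dY (yx x0 n) (g x0) < \<delta>" "5 * r n < \<delta>"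
      using ev_exists by blast
    have "\<bar>dX x0 (xy n) - dY (yx x0 n) y\<bar> \<le> 5 * r n" by (rule Gd_comp[OF yx[OF x0(1)] xy])
    moreover have "dY (g x0) y \<le> dY (g x0) (yx x0 n) + dY (yx x0 n) y"
      using MY.triangle[of "g x0" "yx x0 n" y] gY[OF x0(1)] yxY[OF x0(1)] y by simp
    moreover have "dY (g x0) (yx x0 n) = dY (yx x0 n) (g x0)" "dX x0 (xy n) = dX (xy n) x0"
      using MY.commute MX.commute by auto
    moreover have "0 \<le> dY (g x0) y" by simp
    ultimately show "\<bar>dY (g x0) y - 0\<bar> < 3 * \<delta>" using n by linarith
  qed
  then have "g x0 = y" using MY.zero gY[OF x0(1)] y by blast
  then show ?thesis using x0(1) by blast
qed

lemma closeness:
  assumes d: "0 < \<delta>"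
  shows "eventually (\<lambda>n. \<forall>x y. Gd n x y \<longrightarrow> dY y (g x) < \<delta>) U"
proof -
  have d4: "0 < \<delta> / 4" using d by simp
  obtain N where N: "finite N" "N \<subseteq> X" "X \<subseteq> (\<Union>s\<in>N. MX.mball s (\<delta> / 4))"
    using MX.nets[OF d4] by blast
  have e1: "eventually (\<lambda>n. \<forall>s\<in>N. dY (yx s n) (g s) < \<delta> / 4) U"
  proof (rule eventually_ball_finite[OF N(1)])
    show "\<forall>s\<in>N. eventually (\<lambda>n. dY (yx s n) (g s) < \<delta> / 4) U"
      using N(2) g_ev[OF _ d4] by blast
  qed
  show ?thesis
    using eventually_conj[OF e1 r5[OF d4]]
  proof (rule eventually_mono)
    fix n assume H: "(\<forall>s\<in>N. dY (yx s n) (g s) < \<delta> / 4) \<and> 5 * r n < \<delta> / 4"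
    show "\<forall>x y. Gd n x y \<longrightarrow> dY y (g x) < \<delta>"
    proof (intro allI impI)
      fix x y assume G: "Gd n x y"
      then have x: "x \<in> X" and y: "y \<in> Y" by (auto simp: Gd_def)
      have "x \<in> (\<Union>s\<in>N. MX.mball s (\<delta> / 4))" using N(3) x by blast
      then obtain s where s: "s \<in> N" "x \<in> MX.mball s (\<delta> / 4)" by blast
      have sX: "s \<in> X" using s N(2) by blast
      have dsx: "dX s x < \<delta> / 4" using s by simp
      have "\<bar>dX x s - dY y (yx s n)\<bar> \<le> 5 * r n" by (rule Gd_comp[OF G yx[OF sX]])
      moreover have "dY y (g s) \<le> dY y (yx s n) + dY (yx s n) (g s)"
        using MY.triangle[of y "yx s n" "g s"] y yxY[OF sX] gY[OF sX] by simp
      moreover have "dY y (g x) \<le> dY y (g s) + dY (g s) (g x)"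
        using MY.triangle[of y "g s" "g x"] y gY[OF sX] gY[OF x] by simp
      moreover have "dY (g s) (g x) = dX s x" by (rule g_isom[OF sX x])
      moreover have "dX x s = dX s x" using MX.commute by auto
      ultimately show "dY y (g x) < \<delta>" using H s(1) dsx by force
    qed
  qed
qed

lemma g_inj: "inj_on g X"
proof (rule inj_onI)
  fix x x' assume "x \<in> X" "x' \<in> X" "g x = g x'"
  then have "dX x x' = 0" using g_isom gY by (metis MY.mdist_zero)
  then show "x = x'" using \<open>x \<in> X\<close> \<open>x' \<in> X\<close> MX.zero by blast
qed

lemma g_bij: "bij_betw g X Y"
proof -
  have "g ` X = Y" using gY g_surj by blast
  then show ?thesis using g_inj by (simp add: bij_betw_def)
qed

lemma g_open: assumes V: "openin MY.mtopology V" shows "openin MX.mtopology {x\<in>X. g x \<in> V}"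
  unfolding MX.openin_mtopology
proof (intro conjI allI impI)
  show "{x \<in> X. g x \<in> V} \<subseteq> X" by blast
next
  fix x assume x: "x \<in> {x \<in> X. g x \<in> V}"
  then obtain e where e: "e > 0" "MY.mball (g x) e \<subseteq> V"
    using V unfolding MY.openin_mtopology by blast
  have "MX.mball x e \<subseteq> {x \<in> X. g x \<in> V}"
  proof
    fix x' assume x': "x' \<in> MX.mball x e"
    then have "x' \<in> X" "dX x x' < e" by auto
    then have "g x' \<in> MY.mball (g x) e" using x g_isom gY by auto
    then show "x' \<in> {x \<in> X. g x \<in> V}" using e \<open>x' \<in> X\<close> by blast
  qed
  then show "\<exists>r>0. MX.mball x r \<subseteq> {x \<in> X. g x \<in> V}" using e by blast
qed

lemma g_closed: assumes K: "closedin MY.mtopology K" shows "closedin MX.mtopology {x\<in>X. g x \<in> K}"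
proof -
  have "openin MY.mtopology (Y - K)" using K by (simp add: closedin_def)
  then have "openin MX.mtopology {x\<in>X. g x \<in> Y - K}" by (rule g_open)
  moreover have "{x\<in>X. g x \<in> Y - K} = X - {x\<in>X. g x \<in> K}" using gY by blast
  ultimately show ?thesis by (simp add: closedin_def)
qed

lemma g_meas: "g \<in> measurable \<mu>X \<mu>Y"
proof (rule measurable_sigma_sets)
  show "sets \<mu>Y = sigma_sets Y {U. openin MY.mtopology U}"
    using MY.sets_eq by (simp add: borel_sets_of_def)
  show "{U. openin MY.mtopology U} \<subseteq> Pow Y" using openin_subset by fastforce
  show "g \<in> space \<mu>X \<rightarrow> Y" using gY by (simp add: MX.space_eq)
next
  fix V assume "V \<in> {U. openin MY.mtopology U}"
  then have "openin MX.mtopology {x\<in>X. g x \<in> V}" by (intro g_open) simp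
  then have "{x\<in>X. g x \<in> V} \<in> sets \<mu>X" by (rule MX.open_sets)
  moreover have "g -` V \<inter> space \<mu>X = {x\<in>X. g x \<in> V}" by (auto simp: MX.space_eq)
  ultimately show "g -` V \<inter> space \<mu>X \<in> sets \<mu>X" by simp
qed

end

context seqdata
begin

lemma Gd_of_notB: "x \<in> X \<Longrightarrow> y \<in> Y \<Longrightarrow> (x, y) \<notin> B n \<Longrightarrow> Gd n x y"
  using Bgood by (simp add: Gd_def)

lemma plan_facts: "prob_space (\<pi> n)" "sets (\<pi> n) = sets (\<mu>X \<Otimes>\<^sub>M \<mu>Y)"
  using adm[of n] by (auto simp: pgw_admissible_def)

lemma closed_le1:
  assumes K: "closedin MY.mtopology K"
  shows "measure \<mu>X {x\<in>X. g x \<in> K} \<le> measure \<mu>Y K"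
proof (rule MX.le_of_small)
  fix e :: real assume e: "0 < e"
  define F where "F = {x\<in>X. g x \<in> K}"
  have Fs: "F \<in> sets \<mu>X" unfolding F_def by (rule MX.closed_sets[OF g_closed[OF K]])
  have KY: "K \<subseteq> Y" using closedin_subset[OF K] by simp
  obtain \<delta> where d: "\<delta> > 0" and Kd: "measure \<mu>Y {y\<in>Y. \<exists>z\<in>K. dY y z < \<delta>} \<le> measure \<mu>Y K + e"
    using MY.nbhd_lim[OF K e] by blast
  define Kd where "Kd = {y\<in>Y. \<exists>z\<in>K. dY y z < \<delta>}"
  have Kds: "Kd \<in> sets \<mu>Y" unfolding Kd_def by (rule MY.nbhd_sets[OF KY])
  have "eventually (\<lambda>n. (\<forall>x y. Gd n x y \<longrightarrow> dY y (g x) < \<delta>) \<and> r n < e) U"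
    using eventually_conj[OF closeness[OF d] rlim[OF e]] .
  then obtain n where cl: "\<And>x y. Gd n x y \<Longrightarrow> dY y (g x) < \<delta>" and rn: "r n < e"
    using ev_exists by blast
  interpret PI: prob_space "\<pi> n" by (rule plan_facts)
  have S: "sets (\<pi> n) = sets (\<mu>X \<Otimes>\<^sub>M \<mu>Y)" by (rule plan_facts)
  have "measure \<mu>X F - \<epsilon> n \<le> measure (\<pi> n) (F \<times> Y)"
    by (rule margX_lower[OF adm[of n] e0[of n] Fs])
  also have "\<dots> \<le> measure (\<pi> n) (X \<times> Kd \<union> B n)"
  proof (rule PI.finite_measure_mono)
    show "F \<times> Y \<subseteq> X \<times> Kd \<union> B n"
    proof
      fix z assume z: "z \<in> F \<times> Y"
      then obtain x y where xy: "z = (x, y)" "x \<in> X" "g x \<in> K" "y \<in> Y" by (auto simp: F_def)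
      show "z \<in> X \<times> Kd \<union> B n"
      proof (cases "z \<in> B n")
        case False
        then have "Gd n x y" using xy by (intro Gd_of_notB) auto
        then have "dY y (g x) < \<delta>" by (rule cl)
        then have "y \<in> Kd" using xy by (auto simp: Kd_def)
        then show ?thesis using xy by blast
      qed simp
    qed
    show "X \<times> Kd \<union> B n \<in> sets (\<pi> n)" using Kds X_sets Bs[of n] S by simp
  qed
  also have "\<dots> \<le> measure (\<pi> n) (X \<times> Kd) + measure (\<pi> n) (B n)"
    by (rule measure_Un_le) (use Kds X_sets Bs[of n] S in simp_all)
  also have "\<dots> \<le> (1 + \<epsilon> n) * measure \<mu>Y Kd + r n"
    using margY[OF adm[of n] e0[of n] Kds] Bm[of n] by linarith
  also have "\<dots> \<le> measure \<mu>Y Kd + \<epsilon> n + r n"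
  proof -
    have "\<epsilon> n * measure \<mu>Y Kd \<le> \<epsilon> n * 1" using e0[of n] by (intro mult_left_mono) auto
    then show ?thesis by (simp add: algebra_simps)
  qed
  finally have "measure \<mu>X F \<le> measure \<mu>Y Kd + 2 * \<epsilon> n + r n" by linarith
  moreover have "measure \<mu>Y Kd \<le> measure \<mu>Y K + e" using Kd by (simp add: Kd_def)
  moreover have "\<epsilon> n \<le> r n" by (rule er)
  ultimately show "measure \<mu>X {x\<in>X. g x \<in> K} \<le> measure \<mu>Y K + 4 * e" using rn by (simp add: F_def)
qed

lemma closed_le2:
  assumes K: "closedin MY.mtopology K"
  shows "measure \<mu>Y K \<le> measure \<mu>X {x\<in>X. g x \<in> K}"
proof (rule MX.le_of_small)
  fix e :: real assume e: "0 < e"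
  define F where "F = {x\<in>X. g x \<in> K}"
  have FC: "closedin MX.mtopology F" unfolding F_def by (rule g_closed[OF K])
  have KY: "K \<subseteq> Y" using closedin_subset[OF K] by simp
  have Ks: "K \<in> sets \<mu>Y" by (rule MY.closed_sets[OF K])
  have FX: "F \<subseteq> X" by (auto simp: F_def)
  obtain \<delta> where d: "\<delta> > 0" and Fd: "measure \<mu>X {x\<in>X. \<exists>z\<in>F. dX x z < \<delta>} \<le> measure \<mu>X F + e"
    using MX.nbhd_lim[OF FC e] by blast
  define Fd where "Fd = {x\<in>X. \<exists>z\<in>F. dX x z < \<delta>}"
  have Fds: "Fd \<in> sets \<mu>X" unfolding Fd_def by (rule MX.nbhd_sets[OF FX])
  have "eventually (\<lambda>n. (\<forall>x y. Gd n x y \<longrightarrow> dY y (g x) < \<delta>) \<and> r n < e) U"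
    using eventually_conj[OF closeness[OF d] rlim[OF e]] .
  then obtain n where cl: "\<And>x y. Gd n x y \<Longrightarrow> dY y (g x) < \<delta>" and rn: "r n < e"
    using ev_exists by blast
  interpret PI: prob_space "\<pi> n" by (rule plan_facts)
  have S: "sets (\<pi> n) = sets (\<mu>X \<Otimes>\<^sub>M \<mu>Y)" by (rule plan_facts)
  have "measure \<mu>Y K - \<epsilon> n \<le> measure (\<pi> n) (X \<times> K)"
    by (rule margY_lower[OF adm[of n] e0[of n] Ks])
  also have "\<dots> \<le> measure (\<pi> n) (Fd \<times> Y \<union> B n)"
  proof (rule PI.finite_measure_mono)
    show "X \<times> K \<subseteq> Fd \<times> Y \<union> B n"
    proof
      fix z assume z: "z \<in> X \<times> K"
      then obtain x y where xy: "z = (x, y)" "x \<in> X" "y \<in> K" by blast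
      have yY: "y \<in> Y" using xy KY by blast
      show "z \<in> Fd \<times> Y \<union> B n"
      proof (cases "z \<in> B n")
        case False
        then have "Gd n x y" using xy yY by (intro Gd_of_notB) auto
        then have dy: "dY y (g x) < \<delta>" by (rule cl)
        obtain w where w: "w \<in> X" "g w = y" using g_surj[OF yY] by blast
        then have wF: "w \<in> F" using xy by (simp add: F_def)
        have "dX x w = dY (g x) (g w)" using g_isom[OF xy(2) w(1)] by simp
        also have "\<dots> = dY y (g x)" using w MY.commute by simp
        finally have "dX x w < \<delta>" using dy by simp
        then have "x \<in> Fd" using xy wF by (auto simp: Fd_def)
        then show ?thesis using xy yY by blast
      qed simp
    qed
    show "Fd \<times> Y \<union> B n \<in> sets (\<pi> n)" using Fds Y_sets Bs[of n] S by simp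
  qed
  also have "\<dots> \<le> measure (\<pi> n) (Fd \<times> Y) + measure (\<pi> n) (B n)"
    by (rule measure_Un_le) (use Fds Y_sets Bs[of n] S in simp_all)
  also have "\<dots> \<le> (1 + \<epsilon> n) * measure \<mu>X Fd + r n"
    using margX[OF adm[of n] e0[of n] Fds] Bm[of n] by linarith
  also have "\<dots> \<le> measure \<mu>X Fd + \<epsilon> n + r n"
  proof -
    have "\<epsilon> n * measure \<mu>X Fd \<le> \<epsilon> n * 1" using e0[of n] by (intro mult_left_mono) auto
    then show ?thesis by (simp add: algebra_simps)
  qed
  finally have "measure \<mu>Y K \<le> measure \<mu>X Fd + 2 * \<epsilon> n + r n" by linarith
  moreover have "measure \<mu>X Fd \<le> measure \<mu>X F + e" using Fd by (simp add: Fd_def)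
  moreover have "\<epsilon> n \<le> r n" by (rule er)
  ultimately show "measure \<mu>Y K \<le> measure \<mu>X {x\<in>X. g x \<in> K} + 4 * e" using rn by (simp add: F_def)
qed

lemma distr_g: "distr \<mu>X \<mu>Y g = \<mu>Y"
proof -
  define \<nu> where "\<nu> = distr \<mu>X \<mu>Y g"
  interpret NU: prob_space \<nu> unfolding \<nu>_def by (rule MX.P.prob_space_distr[OF g_meas])
  have sn: "sets \<nu> = sets \<mu>Y" by (simp add: \<nu>_def)
  have spn: "space \<nu> = Y" by (simp add: \<nu>_def MY.space_eq)
  have nuK: "measure \<nu> K = measure \<mu>Y K" if K: "closedin MY.mtopology K" for K
  proof -
    have Ks: "K \<in> sets \<mu>Y" by (rule MY.closed_sets[OF K])
    have "measure \<nu> K = measure \<mu>X (g -` K \<inter> space \<mu>X)"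
      unfolding \<nu>_def by (rule measure_distr[OF g_meas Ks])
    also have "g -` K \<inter> space \<mu>X = {x\<in>X. g x \<in> K}" by (auto simp: MX.space_eq)
    finally show ?thesis using closed_le1[OF K] closed_le2[OF K] by simp
  qed
  have "\<nu> = \<mu>Y"
  proof (rule measure_eqI_generator_eq[where E="{U. openin MY.mtopology U}" and \<Omega>=Y and A="\<lambda>_. Y"])
    show "Int_stable {U. openin MY.mtopology U}" by (auto simp: Int_stable_def)
    show "{U. openin MY.mtopology U} \<subseteq> Pow Y" using openin_subset by fastforce
    show "sets \<nu> = sigma_sets Y {U. openin MY.mtopology U}"
      using sn MY.sets_eq by (simp add: borel_sets_of_def)
    show "sets \<mu>Y = sigma_sets Y {U. openin MY.mtopology U}"
      using MY.sets_eq by (simp add: borel_sets_of_def)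
    show "range (\<lambda>_. Y) \<subseteq> {U. openin MY.mtopology U}"
      using openin_topspace[of MY.mtopology] by simp
    show "(\<Union>i::nat. Y) = Y" by simp
    show "emeasure \<nu> Y \<noteq> \<infinity>" by simp
  next
    fix V assume "V \<in> {U. openin MY.mtopology U}"
    then have V: "openin MY.mtopology V" by simp
    have VY: "V \<subseteq> Y" using openin_subset[OF V] by simp
    have "Y - (Y - V) = V" using VY by blast
    then have K: "closedin MY.mtopology (Y - V)" using V by (simp add: closedin_def)
    have Vs: "V \<in> sets \<mu>Y" by (rule MY.open_sets[OF V])
    have "measure \<nu> V = 1 - measure \<nu> (Y - V)"
    proof -
      have "measure \<nu> (space \<nu> - V) = 1 - measure \<nu> V" using Vs sn by (intro NU.prob_compl) simp
      then show ?thesis using spn by simp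
    qed
    also have "\<dots> = 1 - measure \<mu>Y (Y - V)" using nuK[OF K] by simp
    also have "\<dots> = measure \<mu>Y V"
    proof -
      have "measure \<mu>Y (space \<mu>Y - V) = 1 - measure \<mu>Y V" using Vs by (rule MY.P.prob_compl)
      then show ?thesis using MY.space_eq by simp
    qed
    finally have "measure \<nu> V = measure \<mu>Y V" .
    then show "emeasure \<nu> V = emeasure \<mu>Y V"
      by (simp add: NU.emeasure_eq_measure MY.P.emeasure_eq_measure)
  qed
  then show ?thesis by (simp add: \<nu>_def)
qed

lemma iso: "pmm_isomorphic X dX \<mu>X Y dY \<mu>Y"
  unfolding pmm_isomorphic_def using g_bij g_isom g_meas distr_g by blast

end

lemma ex_ultra:
  "\<exists>U::nat filter. U \<noteq> bot \<and> U \<le> sequentially \<and> (\<forall>P. eventually P U \<or> eventually (\<lambda>x. \<not> P x) U)"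
proof -
  define A where "A = {F::nat filter. F \<noteq> bot \<and> F \<le> sequentially}"
  define R where "R = (\<lambda>F G::nat filter. G \<le> F)"
  have po: "partial_order_on A (relation_of R A)"
    by (rule partial_order_on_relation_ofI) (auto simp: R_def)
  have ch: "\<exists>u \<in> A. \<forall>a \<in> C. R a u" if C: "C \<in> Chains (relation_of R A)" for C
  proof (cases "C = {}")
    case True
    then show ?thesis by (intro bexI[of _ sequentially]) (auto simp: A_def R_def)
  next
    case False
    have CA: "C \<subseteq> A" using C False unfolding Chains_def relation_of_def by auto
    have base: "\<exists>x\<in>C. x \<le> inf F G" if "F \<in> C" "G \<in> C" for F G
    proof -
      have "G \<le> F \<or> F \<le> G"
        using C that unfolding Chains_def relation_of_def R_def by auto
      then show ?thesis
      proof
        assume "G \<le> F" then show ?thesis using that(2) by (intro bexI[of _ G]) auto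
      next
        assume "F \<le> G" then show ?thesis using that(1) by (intro bexI[of _ F]) auto
      qed
    qed
    have ev: "eventually P (Inf C) \<longleftrightarrow> (\<exists>b\<in>C. eventually P b)" for P
      by (rule eventually_Inf_base[OF False base])
    have "Inf C \<noteq> bot"
    proof
      assume "Inf C = bot"
      then have "eventually (\<lambda>_. False) (Inf C)" by simp
      then obtain b where "b \<in> C" "eventually (\<lambda>_. False) b" using ev by blast
      then show False using CA by (auto simp: A_def)
    qed
    moreover have "Inf C \<le> sequentially"
    proof -
      obtain c where "c \<in> C" using False by blast
      moreover have "c \<le> sequentially" using \<open>c \<in> C\<close> CA by (auto simp: A_def)
      ultimately show ?thesis using Inf_lower[of c C] by (rule_tac order_trans) auto
    qed
    ultimately have "Inf C \<in> A" by (simp add: A_def)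
    moreover have "\<forall>a \<in> C. R a (Inf C)" by (simp add: R_def Inf_lower)
    ultimately show ?thesis by blast
  qed
  obtain m where m: "m \<in> A" and max: "\<And>a. a \<in> A \<Longrightarrow> R m a \<Longrightarrow> a = m"
    using predicate_Zorn[OF po ch] by blast
  have "eventually P m \<or> eventually (\<lambda>x. \<not> P x) m" for P
  proof (rule ccontr)
    assume H: "\<not> (eventually P m \<or> eventually (\<lambda>x. \<not> P x) m)"
    define G where "G = inf m (principal {x. P x})"
    have "G \<noteq> bot"
      using H by (auto simp: G_def trivial_limit_def eventually_inf_principal)
    moreover have "G \<le> sequentially" using m by (auto simp: A_def G_def intro: le_infI1)
    ultimately have GA: "G \<in> A" by (simp add: A_def)
    have "R m G" by (simp add: R_def G_def)
    then have "G = m" using max GA by blast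
    have "eventually P G" unfolding G_def eventually_inf_principal by simp
    then have "eventually P m" using \<open>G = m\<close> by simp
    with H show False by blast
  qed
  then show ?thesis using m by (auto simp: A_def)
qed


context pmm2
begin

lemma small_of_robust:
  assumes k: "0 < k" and p: "1 \<le> p" and R: "PGW_robust dX \<mu>X dY \<mu>Y k p = 0" and t: "0 < t"
  shows "\<exists>\<epsilon> \<pi>. 0 \<le> \<epsilon> \<and> \<epsilon> \<le> t \<and> pgw_admissible \<mu>X \<mu>Y \<epsilon> \<pi> \<and> lp_distortion dX dY p \<pi> \<le> ennreal t"
proof -
  define S where "S = {\<epsilon> / (1 + \<epsilon>) | \<epsilon>. \<epsilon> \<ge> 0 \<and> PGW_eps dX \<mu>X dY \<mu>Y \<epsilon> p \<le> ennreal (k * \<epsilon>)}"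
  have RS: "Inf S = 0" using R by (simp add: PGW_robust_def S_def)
  obtain \<epsilon>0 where "\<epsilon>0 \<ge> 0" "PGW_eps dX \<mu>X dY \<mu>Y \<epsilon>0 p \<le> ennreal (k * \<epsilon>0)"
    using exists_adm_bound[OF k p] by blast
  then have Sne: "S \<noteq> {}" by (auto simp: S_def)
  have Sbdd: "bdd_below S" unfolding S_def by (rule bdd_belowI[of _ 0]) auto
  define u where "u = min (1/2) (t / (2 * k + 2))"
  have u0: "0 < u" using t k by (simp add: u_def)
  have u12: "u \<le> 1/2" unfolding u_def by (rule min.cobounded1)
  have ut: "(2 * k + 2) * u \<le> t" using k t by (simp add: u_def min_def pos_le_divide_eq mult.commute)
  have "Inf S < u" using RS u0 by simp
  then obtain x where "x \<in> S" "x < u" using cInf_less_iff[OF Sne Sbdd] by blast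
  then obtain \<epsilon> where e0: "0 \<le> \<epsilon>" and PG: "PGW_eps dX \<mu>X dY \<mu>Y \<epsilon> p \<le> ennreal (k * \<epsilon>)"
    and eu: "\<epsilon> / (1 + \<epsilon>) < u" by (auto simp: S_def)
  have "\<epsilon> < u * (1 + \<epsilon>)" using eu e0 by (simp add: pos_divide_less_eq)
  moreover have "u * \<epsilon> \<le> (1/2) * \<epsilon>" using u12 e0 by (intro mult_right_mono) auto
  ultimately have e2u: "\<epsilon> < 2 * u" by (simp add: algebra_simps)
  have "PGW_eps dX \<mu>X dY \<mu>Y \<epsilon> p < ennreal (k * \<epsilon> + u)"
  proof -
    have "ennreal (k * \<epsilon>) < ennreal (k * \<epsilon> + u)"
    proof (rule ennreal_lessI)
      have "0 \<le> k * \<epsilon>" using k e0 by simp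
      then show "0 < k * \<epsilon> + u" using u0 by linarith
      show "k * \<epsilon> < k * \<epsilon> + u" using u0 by simp
    qed
    with PG show ?thesis by (rule le_less_trans)
  qed
  then obtain \<pi> where adm: "pgw_admissible \<mu>X \<mu>Y \<epsilon> \<pi>" and lt: "lp_distortion dX dY p \<pi> < ennreal (k * \<epsilon> + u)"
    unfolding PGW_eps_def Inf_less_iff by blast
  have ke: "k * \<epsilon> \<le> k * (2 * u)" using k e2u by (intro mult_left_mono) auto
  have "(2 * k + 2) * u = 2 * (k * u) + 2 * u" by (simp add: algebra_simps)
  moreover have "k * (2 * u) = 2 * (k * u)" by simp
  ultimately have "k * \<epsilon> + u \<le> t" using ke ut u0 by linarith
  then have "lp_distortion dX dY p \<pi> \<le> ennreal t"
    using lt by (metis ennreal_leI less_imp_le order_trans)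
  moreover have "\<epsilon> \<le> t"
  proof -
    have "2 * u \<le> (2 * k + 2) * u" using k u0 by (intro mult_right_mono) auto
    then show ?thesis using e2u ut by linarith
  qed
  ultimately show ?thesis using e0 adm by blast
qed

lemma robust_iso:
  assumes k: "0 < k" and p: "1 \<le> p" and R: "PGW_robust dX \<mu>X dY \<mu>Y k p = 0"
  shows "pmm_isomorphic X dX \<mu>X Y dY \<mu>Y"
proof -
  define r where "r n = inverse (real (Suc (Suc n)))" for n
  have r0: "0 < r n" for n by (simp add: r_def)
  have r12: "r n \<le> 1/2" for n by (simp add: r_def field_simps)
  have H1: "\<forall>n. \<exists>\<pi> \<epsilon> c. 0 < c \<and> pgw_admissible \<mu>X \<mu>Y \<epsilon> \<pi> \<and> 0 \<le> \<epsilon> \<and> \<epsilon> \<le> r n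
     \<and> (\<forall>x\<in>X. \<exists>y\<in>Y. c \<le> measure \<pi> (MX.mball x (r n) \<times> MY.mball y (r n)))
     \<and> (\<forall>y\<in>Y. \<exists>x\<in>X. c \<le> measure \<pi> (MX.mball x (r n) \<times> MY.mball y (r n)))
     \<and> (\<forall>x x' y y'. c \<le> measure \<pi> (MX.mball x (r n) \<times> MY.mball y (r n)) \<longrightarrow>
            c \<le> measure \<pi> (MX.mball x' (r n) \<times> MY.mball y' (r n)) \<longrightarrow> \<bar>dX x x' - dY y y'\<bar> \<le> 5 * r n)
     \<and> (\<exists>B\<in>sets \<pi>. measure \<pi> B \<le> r n \<and>
            (\<forall>x\<in>X. \<forall>y\<in>Y. (x, y) \<notin> B \<longrightarrow> c \<le> measure \<pi> (MX.mball x (r n) \<times> MY.mball y (r n))))"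
  proof
    fix n
    show "\<exists>\<pi> \<epsilon> c. 0 < c \<and> pgw_admissible \<mu>X \<mu>Y \<epsilon> \<pi> \<and> 0 \<le> \<epsilon> \<and> \<epsilon> \<le> r n
     \<and> (\<forall>x\<in>X. \<exists>y\<in>Y. c \<le> measure \<pi> (MX.mball x (r n) \<times> MY.mball y (r n)))
     \<and> (\<forall>y\<in>Y. \<exists>x\<in>X. c \<le> measure \<pi> (MX.mball x (r n) \<times> MY.mball y (r n)))
     \<and> (\<forall>x x' y y'. c \<le> measure \<pi> (MX.mball x (r n) \<times> MY.mball y (r n)) \<longrightarrow>
            c \<le> measure \<pi> (MX.mball x' (r n) \<times> MY.mball y' (r n)) \<longrightarrow> \<bar>dX x x' - dY y y'\<bar> \<le> 5 * r n)
     \<and> (\<exists>B\<in>sets \<pi>. measure \<pi> B \<le> r n \<and>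
            (\<forall>x\<in>X. \<forall>y\<in>Y. (x, y) \<notin> B \<longrightarrow> c \<le> measure \<pi> (MX.mball x (r n) \<times> MY.mball y (r n))))"
      by (rule scale[OF small_of_robust[OF k p R] p r0 r12])
  qed
  obtain \<pi> where H2: "\<forall>n. \<exists>\<epsilon> c. 0 < c \<and> pgw_admissible \<mu>X \<mu>Y \<epsilon> (\<pi> n) \<and> 0 \<le> \<epsilon> \<and> \<epsilon> \<le> r n
     \<and> (\<forall>x\<in>X. \<exists>y\<in>Y. c \<le> measure (\<pi> n) (MX.mball x (r n) \<times> MY.mball y (r n)))
     \<and> (\<forall>y\<in>Y. \<exists>x\<in>X. c \<le> measure (\<pi> n) (MX.mball x (r n) \<times> MY.mball y (r n)))
     \<and> (\<forall>x x' y y'. c \<le> measure (\<pi> n) (MX.mball x (r n) \<times> MY.mball y (r n)) \<longrightarrow>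
            c \<le> measure (\<pi> n) (MX.mball x' (r n) \<times> MY.mball y' (r n)) \<longrightarrow> \<bar>dX x x' - dY y y'\<bar> \<le> 5 * r n)
     \<and> (\<exists>B\<in>sets (\<pi> n). measure (\<pi> n) B \<le> r n \<and>
            (\<forall>x\<in>X. \<forall>y\<in>Y. (x, y) \<notin> B \<longrightarrow> c \<le> measure (\<pi> n) (MX.mball x (r n) \<times> MY.mball y (r n))))"
    using choice[OF H1] by (elim exE) (rule that)
  obtain \<epsilon> where H3: "\<forall>n. \<exists>c. 0 < c \<and> pgw_admissible \<mu>X \<mu>Y (\<epsilon> n) (\<pi> n) \<and> 0 \<le> \<epsilon> n \<and> \<epsilon> n \<le> r n
     \<and> (\<forall>x\<in>X. \<exists>y\<in>Y. c \<le> measure (\<pi> n) (MX.mball x (r n) \<times> MY.mball y (r n)))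
     \<and> (\<forall>y\<in>Y. \<exists>x\<in>X. c \<le> measure (\<pi> n) (MX.mball x (r n) \<times> MY.mball y (r n)))
     \<and> (\<forall>x x' y y'. c \<le> measure (\<pi> n) (MX.mball x (r n) \<times> MY.mball y (r n)) \<longrightarrow>
            c \<le> measure (\<pi> n) (MX.mball x' (r n) \<times> MY.mball y' (r n)) \<longrightarrow> \<bar>dX x x' - dY y y'\<bar> \<le> 5 * r n)
     \<and> (\<exists>B\<in>sets (\<pi> n). measure (\<pi> n) B \<le> r n \<and>
            (\<forall>x\<in>X. \<forall>y\<in>Y. (x, y) \<notin> B \<longrightarrow> c \<le> measure (\<pi> n) (MX.mball x (r n) \<times> MY.mball y (r n))))"
    using choice[OF H2] by (elim exE) (rule that)
  obtain c where H4: "\<forall>n. 0 < c n \<and> pgw_admissible \<mu>X \<mu>Y (\<epsilon> n) (\<pi> n) \<and> 0 \<le> \<epsilon> n \<and> \<epsilon> n \<le> r n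
     \<and> (\<forall>x\<in>X. \<exists>y\<in>Y. c n \<le> measure (\<pi> n) (MX.mball x (r n) \<times> MY.mball y (r n)))
     \<and> (\<forall>y\<in>Y. \<exists>x\<in>X. c n \<le> measure (\<pi> n) (MX.mball x (r n) \<times> MY.mball y (r n)))
     \<and> (\<forall>x x' y y'. c n \<le> measure (\<pi> n) (MX.mball x (r n) \<times> MY.mball y (r n)) \<longrightarrow>
            c n \<le> measure (\<pi> n) (MX.mball x' (r n) \<times> MY.mball y' (r n)) \<longrightarrow> \<bar>dX x x' - dY y y'\<bar> \<le> 5 * r n)
     \<and> (\<exists>B\<in>sets (\<pi> n). measure (\<pi> n) B \<le> r n \<and>
            (\<forall>x\<in>X. \<forall>y\<in>Y. (x, y) \<notin> B \<longrightarrow> c n \<le> measure (\<pi> n) (MX.mball x (r n) \<times> MY.mball y (r n))))"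
    using choice[OF H3] by (elim exE) (rule that)
  note Hn = spec[OF H4]
  note C1 = conjunct1[OF Hn] and C2 = conjunct1[OF conjunct2[OF Hn]] and C3 = conjunct1[OF conjunct2[OF conjunct2[OF Hn]]] and C4 = conjunct1[OF conjunct2[OF conjunct2[OF conjunct2[OF Hn]]]] and C5 = conjunct1[OF conjunct2[OF conjunct2[OF conjunct2[OF conjunct2[OF Hn]]]]] and C6 = conjunct1[OF conjunct2[OF conjunct2[OF conjunct2[OF conjunct2[OF conjunct2[OF Hn]]]]]] and C7 = conjunct1[OF conjunct2[OF conjunct2[OF conjunct2[OF conjunct2[OF conjunct2[OF conjunct2[OF Hn]]]]]]] and C8 = conjunct2[OF conjunct2[OF conjunct2[OF conjunct2[OF conjunct2[OF conjunct2[OF conjunct2[OF Hn]]]]]]]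

  have H5: "\<forall>n. \<exists>B. B \<in> sets (\<pi> n) \<and> (measure (\<pi> n) B \<le> r n \<and>
            (\<forall>x\<in>X. \<forall>y\<in>Y. (x, y) \<notin> B \<longrightarrow> c n \<le> measure (\<pi> n) (MX.mball x (r n) \<times> MY.mball y (r n))))"
  proof
    fix n
    show "\<exists>B. B \<in> sets (\<pi> n) \<and> (measure (\<pi> n) B \<le> r n \<and>
            (\<forall>x\<in>X. \<forall>y\<in>Y. (x, y) \<notin> B \<longrightarrow> c n \<le> measure (\<pi> n) (MX.mball x (r n) \<times> MY.mball y (r n))))"
      using C8[of n] unfolding Bex_def .
  qed
  obtain B where HB: "\<forall>n. B n \<in> sets (\<pi> n) \<and> (measure (\<pi> n) (B n) \<le> r n \<and>
            (\<forall>x\<in>X. \<forall>y\<in>Y. (x, y) \<notin> B n \<longrightarrow> c n \<le> measure (\<pi> n) (MX.mball x (r n) \<times> MY.mball y (r n))))"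
    using choice[OF H5] by (elim exE) (rule that)
  note Bn = spec[OF HB]
  note B1 = conjunct1[OF Bn] and B2 = conjunct1[OF conjunct2[OF Bn]] and B3 = conjunct2[OF conjunct2[OF Bn]]

  obtain U :: "nat filter" where U: "U \<noteq> bot" "U \<le> sequentially" "\<forall>P. eventually P U \<or> eventually (\<lambda>x. \<not> P x) U"
    using ex_ultra by blast
  have rlim: "eventually (\<lambda>n. r n < e) U" if e: "0 < e" for e
  proof -
    obtain m where m: "inverse (real (Suc m)) < e" using ex_inv_Suc_less[OF e] by blast
    have "eventually (\<lambda>n. r n < e) sequentially"
      unfolding eventually_sequentially
    proof (intro exI allI impI)
      fix n assume "m \<le> n"
      then have h: "inverse (real (Suc (Suc n))) \<le> inverse (real (Suc m))"
        by (intro le_imp_inverse_le) auto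
      show "r n < e" unfolding r_def using h m by linarith
    qed
    then show ?thesis by (rule filter_leD[OF U(2)])
  qed
  interpret SD: seqdata X dX \<mu>X Y dY \<mu>Y \<pi> \<epsilon> c r B U
  proof (unfold_locales)
    show "\<And>n. pgw_admissible \<mu>X \<mu>Y (\<epsilon> n) (\<pi> n)" by (rule C2)
    show "\<And>n. 0 \<le> \<epsilon> n" by (rule C3)
    show "\<And>n. \<epsilon> n \<le> r n" by (rule C4)
    show "\<And>e. 0 < e \<Longrightarrow> eventually (\<lambda>n. r n < e) U" by (rule rlim)
    show "\<And>n x. x \<in> X \<Longrightarrow> \<exists>y\<in>Y. c n \<le> measure (\<pi> n) (MX.mball x (r n) \<times> MY.mball y (r n))"
      using C5 by (rule bspec)
    show "\<And>n y. y \<in> Y \<Longrightarrow> \<exists>x\<in>X. c n \<le> measure (\<pi> n) (MX.mball x (r n) \<times> MY.mball y (r n))"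
      using C6 by (rule bspec)
    show "\<And>n x x' y y'. c n \<le> measure (\<pi> n) (MX.mball x (r n) \<times> MY.mball y (r n)) \<Longrightarrow>
            c n \<le> measure (\<pi> n) (MX.mball x' (r n) \<times> MY.mball y' (r n)) \<Longrightarrow> \<bar>dX x x' - dY y y'\<bar> \<le> 5 * r n"
      using C7 by blast
    show "\<And>n. B n \<in> sets (\<pi> n)" by (rule B1)
    show "\<And>n. measure (\<pi> n) (B n) \<le> r n" by (rule B2)
    show "\<And>n x y. x \<in> X \<Longrightarrow> y \<in> Y \<Longrightarrow> (x, y) \<notin> B n \<Longrightarrow> c n \<le> measure (\<pi> n) (MX.mball x (r n) \<times> MY.mball y (r n))"
      using B3 by blast
    show "U \<noteq> bot" by (rule U(1))
    show "\<forall>P. eventually P U \<or> eventually (\<lambda>x. \<not> P x) U" by (rule U(3))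
  qed
  show ?thesis by (rule SD.iso)
qed

end

theorem theorem4p2:
  fixes X :: "'a set" and dX :: "'a \<Rightarrow> 'a \<Rightarrow> real" and \<mu>X :: "'a measure"
    and Y :: "'b set" and dY :: "'b \<Rightarrow> 'b \<Rightarrow> real" and \<mu>Y :: "'b measure"
    and k :: real and p :: ennreal
  assumes "k > 0" and "1 \<le> p"
    and "pmm_space X dX \<mu>X" and "pmm_compact X dX" and "fully_supported X dX \<mu>X"
    and "pmm_space Y dY \<mu>Y" and "pmm_compact Y dY" and "fully_supported Y dY \<mu>Y"
  shows "PGW_robust dX \<mu>X dY \<mu>Y k p = 0 \<longleftrightarrow> pmm_isomorphic X dX \<mu>X Y dY \<mu>Y"
proof -
  have cX: "cpmm X dX \<mu>X"
    using assms(3-5) by (auto simp: cpmm_def cpmm_axioms_def pmm_space_def)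
  have cY: "cpmm Y dY \<mu>Y"
    using assms(6-8) by (auto simp: cpmm_def cpmm_axioms_def pmm_space_def)
  interpret pmm2 X dX \<mu>X Y dY \<mu>Y
    using cX cY by (simp add: pmm2_def)
  show ?thesis
  proof
    assume "PGW_robust dX \<mu>X dY \<mu>Y k p = 0"
    then show "pmm_isomorphic X dX \<mu>X Y dY \<mu>Y" by (rule robust_iso[OF assms(1,2)])
  next
    assume iso: "pmm_isomorphic X dX \<mu>X Y dY \<mu>Y"
    have P0: "PGW_eps dX \<mu>X dY \<mu>Y 0 p = 0" by (rule iso_zero[OF iso assms(2)])
    define S where "S = {\<epsilon> / (1 + \<epsilon>) | \<epsilon>. \<epsilon> \<ge> 0 \<and> PGW_eps dX \<mu>X dY \<mu>Y \<epsilon> p \<le> ennreal (k * \<epsilon>)}"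
    have "0 \<in> S" unfolding S_def using P0 by (intro CollectI exI[of _ 0]) simp
    moreover have "\<And>x. x \<in> S \<Longrightarrow> 0 \<le> x" by (auto simp: S_def)
    ultimately have "Inf S = 0" by (rule cInf_eq_minimum)
    then show "PGW_robust dX \<mu>X dY \<mu>Y k p = 0" by (simp add: PGW_robust_def S_def)
  qed
qed

end
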